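(* Let $a\in\mathbb{R}$, $b\in(a,\infty)$, $h\in\mathbb{N}$, $v_1,\dots,v_h,w_1,\dots,w_h\in(0,\infty)$, let $f,p\in C(\mathbb{R},\mathbb{R})$ satisfy for all $x\in\mathbb{R}$ that $p(x)\ge0$ and $p^{-1}((0,\infty))=(a,b)$, with $\mathcal{L}$, $I_i^\theta$, $\operatorname{Lip}$ as in the context. Assume $\operatorname{Lip}(f)<\min_{i\in\{1,\dots,h\}}v_iw_i$, let $\theta\in\mathbb{R}^{h+1}$ satisfy $(\nabla\mathcal{L})(\theta)=0$, let $\varepsilon,\delta\in(0,\infty)$ satisfy $\varepsilon-\delta>2[\min_{j\in\{1,\dots,h\}}w_j]^{-1}$ and $\inf_{x\in[a+\delta,b-\delta]}p(x)\ge[\min_{j\in\{1,\dots,h\}}w_j]^{-1}\operatorname{Lip}(p)$, assume that $p|_{[a,a+\varepsilon]}$ is strictly increasing and $p|_{[b-\varepsilon,b]}$ is strictly decreasing, and assume that $\theta$ is not a descending critical point of $\mathcal{L}$. Then for all $x\in(a,b)$ it holds that $$\sum_{j\in\{1,\dots,h\},\,x\in I_j^\theta}v_jw_j\le4\max_{j\in\{1,\dots,h\},\,x\in I_j^\theta}v_jw_j.$$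
   Context: Let $\mathfrak{c}(x)=\min\{\max\{x,0\},1\}$. For $F\in C(\mathbb{R},\mathbb{R})$ let $\operatorname{Lip}(F)=\sup_{x,y\in[a,b],x\ne y}\frac{|F(x)-F(y)|}{|x-y|}$. For $\theta=(\theta_1,\dots,\theta_{h+1})\in\mathbb{R}^{h+1}$ and $i\in\{1,\dots,h\}$ let $\psi_i(\theta)=-[w_i]^{-1}\theta_i$, $I_i^\theta=(\psi_i(\theta),\psi_i(\theta)+[w_i]^{-1})\cap(a,b)$, $\mathcal{N}^\theta(x)=\theta_{h+1}+\sum_{i=1}^hv_i\mathfrak{c}(w_ix+\theta_i)$, and $\mathcal{L}(\theta)=\int_a^b(\mathcal{N}^\theta(x)-f(x))^2p(x)\,\mathrm{d}x$; in this setting $\mathcal{L}\in C^2(\mathbb{R}^{h+1},\mathbb{R})$. For $n\in\mathbb{N}$ and $F\in C^2(\mathbb{R}^n,\mathbb{R})$, a point $x\in\mathbb{R}^n$ is a descending critical point of $F$ if $(\nabla F)(x)=0$ and there exists $u\in\mathbb{R}^n$ with $\langle u,((\operatorname{Hess}F)(x))u\rangle<0$. *)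

theory Defs
  imports "HOL-Analysis.Analysis" "HOL-Library.Extended_Real"
begin

definition clip :: "real \<Rightarrow> real" where
  "clip x = min (max x 0) 1"

definition Lip :: "real \<Rightarrow> real \<Rightarrow> (real \<Rightarrow> real) \<Rightarrow> ereal" where
  "Lip a b F = (SUP xy \<in> {(x, y). x \<in> {a..b} \<and> y \<in> {a..b} \<and> x \<noteq> y}.
                  ereal (\<bar>F (fst xy) - F (snd xy)\<bar> / \<bar>fst xy - snd xy\<bar>))"

text \<open>Points of R^(h+1) are represented as functions nat => real, using coordinates 1..h+1.
  Network weights v, w are indexed by 1..h.\<close>

definition psi :: "(nat \<Rightarrow> real) \<Rightarrow> (nat \<Rightarrow> real) \<Rightarrow> nat \<Rightarrow> real" where
  "psi w \<theta> i = - (\<theta> i / w i)"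

definition Iset :: "real \<Rightarrow> real \<Rightarrow> (nat \<Rightarrow> real) \<Rightarrow> (nat \<Rightarrow> real) \<Rightarrow> nat \<Rightarrow> real set" where
  "Iset a b w \<theta> i = {psi w \<theta> i <..< psi w \<theta> i + 1 / w i} \<inter> {a<..<b}"

definition NN :: "nat \<Rightarrow> (nat \<Rightarrow> real) \<Rightarrow> (nat \<Rightarrow> real) \<Rightarrow> (nat \<Rightarrow> real) \<Rightarrow> real \<Rightarrow> real" where
  "NN h v w \<theta> x = \<theta> (h + 1) + (\<Sum>i = 1..h. v i * clip (w i * x + \<theta> i))"

definition risk :: "real \<Rightarrow> real \<Rightarrow> nat \<Rightarrow> (nat \<Rightarrow> real) \<Rightarrow> (nat \<Rightarrow> real)
                    \<Rightarrow> (real \<Rightarrow> real) \<Rightarrow> (real \<Rightarrow> real) \<Rightarrow> (nat \<Rightarrow> real) \<Rightarrow> real" where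
  "risk a b h v w f p \<theta> = integral {a..b} (\<lambda>x. (NN h v w \<theta> x - f x)\<^sup>2 * p x)"

definition partial :: "((nat \<Rightarrow> real) \<Rightarrow> real) \<Rightarrow> nat \<Rightarrow> (nat \<Rightarrow> real) \<Rightarrow> real" where
  "partial F i \<theta> = deriv (\<lambda>t. F (\<theta>(i := t))) (\<theta> i)"

definition hess :: "((nat \<Rightarrow> real) \<Rightarrow> real) \<Rightarrow> (nat \<Rightarrow> real) \<Rightarrow> nat \<Rightarrow> nat \<Rightarrow> real" where
  "hess F \<theta> i j = partial (partial F j) i \<theta>"

definition descending_critical_point :: "nat \<Rightarrow> ((nat \<Rightarrow> real) \<Rightarrow> real) \<Rightarrow> (nat \<Rightarrow> real) \<Rightarrow> bool" where
  "descending_critical_point n F \<theta> \<longleftrightarrow>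
     (\<forall>i \<in> {1..n}. partial F i \<theta> = 0) \<and>
     (\<exists>u :: nat \<Rightarrow> real. (\<Sum>i = 1..n. \<Sum>j = 1..n. u i * hess F \<theta> i j * u j) < 0)"

end

theory Submission
  imports Defs
begin


lemma anti_deriv:
  fixes F :: "real \<Rightarrow> real"
  assumes "continuous_on UNIV F" "A < y"
  shows "((\<lambda>y. integral {A..y} F) has_real_derivative F y) (at y)"
proof -
  have "continuous_on {A..y+1} F" using assms(1) continuous_on_subset by blast
  from integral_has_real_derivative[OF this, of y] assms(2)
  have "((\<lambda>x. integral {A..x} F) has_real_derivative F y) (at y within {A..y+1})" by simp
  moreover have "at y within {A..y+1} = at y" using assms(2) by (intro at_within_Icc_at) auto
  ultimately show ?thesis by simp
qed

lemma int_split: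
  fixes F :: "real \<Rightarrow> real"
  assumes "continuous_on UNIV F" "A \<le> \<alpha>" "\<alpha> \<le> \<beta>"
  shows "integral {\<alpha>..\<beta>} F = integral {A..\<beta>} F - integral {A..\<alpha>} F"
proof -
  have "F integrable_on {A..\<beta>}"
    using assms(1) continuous_on_subset integrable_continuous_interval by blast
  from Henstock_Kurzweil_Integration.integral_combine[OF assms(2,3) this] show ?thesis by simp
qed

lemma vlim_deriv:
  fixes F :: "real \<Rightarrow> real"
  assumes F: "continuous_on UNIV F" and w: "w > 0"
  shows "((\<lambda>s. integral {-s/w..(1-s)/w} F) has_real_derivative (F(-s0/w) - F((1-s0)/w))/w) (at s0)"
proof -
  define A where "A = -s0/w - 1"
  define P where "P = (\<lambda>y. integral {A..y} F)"
  let ?S = "{s0-w<..<s0+w}"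
  have opS: "open ?S"
    by simp
  have eq: "P ((1-s)/w) - P (-s/w) = integral {-s/w..(1-s)/w} F" if "s \<in> ?S" for s
  proof -
    have "s/w \<le> (s0+w)/w" using that w by (intro divide_right_mono) auto
    then have "A \<le> -s/w" using w unfolding A_def by (simp add: add_divide_distrib)
    moreover have "-s/w \<le> (1-s)/w" using w by (simp add: divide_simps)
    ultimately show ?thesis unfolding P_def using int_split[OF F] by simp
  qed
  have d1: "((\<lambda>s. P ((1-s)/w)) has_real_derivative F((1-s0)/w) * (-1/w)) (at s0)"
  proof (rule DERIV_chain2[where f=P])
    show "(P has_real_derivative F ((1-s0)/w)) (at ((1-s0)/w))"
      unfolding P_def using w by (intro anti_deriv F) (auto simp: A_def field_simps)
    show "((\<lambda>s. (1-s)/w) has_real_derivative (-1/w)) (at s0)"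
      using w by (auto intro!: derivative_eq_intros simp: field_simps)
  qed
  have d2: "((\<lambda>s. P (-s/w)) has_real_derivative F(-s0/w) * (-1/w)) (at s0)"
  proof (rule DERIV_chain2[where f=P])
    show "(P has_real_derivative F (-s0/w)) (at (-s0/w))"
      unfolding P_def using w by (intro anti_deriv F) (auto simp: A_def field_simps)
    show "((\<lambda>s. -s/w) has_real_derivative (-1/w)) (at s0)"
      using w by (auto intro!: derivative_eq_intros simp: field_simps)
  qed
  have "((\<lambda>s. P ((1-s)/w) - P (-s/w)) has_real_derivative (F(-s0/w) - F((1-s0)/w))/w) (at s0)"
    using DERIV_diff[OF d1 d2] by (simp add: diff_divide_distrib)
  then show ?thesis
    by (rule has_field_derivative_transform_within_open[OF _ opS]) (use eq w in auto)
qed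

lemma cint: "continuous_on UNIV (G::real\<Rightarrow>real) \<Longrightarrow> G integrable_on {l..r}"
  by (meson continuous_on_subset integrable_continuous_interval subset_UNIV)

lemma int_lin:
  fixes F :: "real \<Rightarrow> real"
  assumes F: "continuous_on UNIV F"
  shows "integral {l..r} (\<lambda>x. (w*x+s) * F x) = w * integral {l..r} (\<lambda>x. x * F x) + s * integral {l..r} F"
proof -
  have i1: "(\<lambda>x. x * F x) integrable_on {l..r}"
    by (intro cint continuous_intros F)
  have i2: "F integrable_on {l..r}"
    by (intro cint F)
  have "(\<lambda>x. (w*x+s) * F x) = (\<lambda>x. w * (x * F x) + s * F x)" by (auto simp: algebra_simps)
  then have "integral {l..r} (\<lambda>x. (w*x+s) * F x) = integral {l..r} (\<lambda>x. w * (x * F x)) + integral {l..r} (\<lambda>x. s * F x)"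
    using integral_add[OF integrable_cmul[OF i1, of w] integrable_cmul[OF i2, of s]] by simp
  then show ?thesis by simp
qed

lemma vlim_lin_deriv:
  fixes F :: "real \<Rightarrow> real"
  assumes F: "continuous_on UNIV F" and w: "w > 0"
  shows "((\<lambda>s. integral {-s/w..(1-s)/w} (\<lambda>x. (w*x+s) * F x)) has_real_derivative
           integral {-s0/w..(1-s0)/w} F - F((1-s0)/w)/w) (at s0)"
proof -
  have F1: "continuous_on UNIV (\<lambda>x. x * F x)" by (intro continuous_intros F)
  note d1 = vlim_deriv[OF F1 w, of s0]
  note d2 = vlim_deriv[OF F w, of s0]
  define I where "I = integral {-s0/w..(1-s0)/w} F"
  define a1 where "a1 = F(-s0/w)"
  define b1 where "b1 = F((1-s0)/w)"
  note D = DERIV_add[OF DERIV_cmult[OF d1, of w] DERIV_mult[OF DERIV_ident d2]]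
  have e: "w * ((- s0 / w * a1 - (1 - s0) / w * b1) / w) + (1 * I + (a1 - b1) / w * s0) = I - b1/w"
    using w by (simp add: field_simps)
  have "(\<lambda>s. integral {-s/w..(1-s)/w} (\<lambda>x. (w*x+s) * F x)) = (\<lambda>s. w * integral {-s/w..(1-s)/w} (\<lambda>x. x * F x) + s * integral {-s/w..(1-s)/w} F)"
    by (simp add: int_lin[OF F])
  then show ?thesis using D unfolding I_def[symmetric] a1_def[symmetric] b1_def[symmetric] e by simp
qed

lemma int_sq:
  fixes F :: "real \<Rightarrow> real"
  assumes F: "continuous_on UNIV F"
  shows "integral {l..r} (\<lambda>x. (w*x+s)^2 * F x) = w^2 * integral {l..r} (\<lambda>x. x^2 * F x) + (2*w * s) * integral {l..r} (\<lambda>x. x * F x) + s^2 * integral {l..r} F"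
proof -
  have i0: "(\<lambda>x. x^2 * F x) integrable_on {l..r}"
    by (intro cint continuous_intros F)
  have i1: "(\<lambda>x. x * F x) integrable_on {l..r}"
    by (intro cint continuous_intros F)
  have i2: "F integrable_on {l..r}"
    by (intro cint F)
  have "(\<lambda>x. (w*x+s)^2 * F x) = (\<lambda>x. w^2 * (x^2 * F x) + (2*w * s) * (x * F x) + s^2 * F x)"
    by (auto simp: algebra_simps power2_eq_square)
  moreover have "integral {l..r} (\<lambda>x. w^2 * (x^2 * F x) + (2*w * s) * (x * F x) + s^2 * F x) = integral {l..r} (\<lambda>x. w^2 * (x^2 * F x) + (2*w * s) * (x * F x)) + integral {l..r} (\<lambda>x. s^2 * F x)"
    by (rule integral_add) (intro cint continuous_intros F)+
  moreover have "integral {l..r} (\<lambda>x. w^2 * (x^2 * F x) + (2*w * s) * (x * F x)) = integral {l..r} (\<lambda>x. w^2 * (x^2 * F x)) + integral {l..r} (\<lambda>x. (2*w * s) * (x * F x))"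
    by (rule integral_add) (intro cint continuous_intros F)+
  ultimately have "integral {l..r} (\<lambda>x. (w*x+s)^2 * F x) = integral {l..r} (\<lambda>x. w^2 * (x^2 * F x)) + integral {l..r} (\<lambda>x. (2*w * s) * (x * F x)) + integral {l..r} (\<lambda>x. s^2 * F x)"
    by simp
  then show ?thesis by simp
qed

lemma vlim_sq_deriv:
  fixes F :: "real \<Rightarrow> real"
  assumes F: "continuous_on UNIV F" and w: "w > 0"
  shows "((\<lambda>s. integral {-s/w..(1-s)/w} (\<lambda>x. (w*x+s)^2 * F x)) has_real_derivative
           2 * integral {-s0/w..(1-s0)/w} (\<lambda>x. (w*x+s0) * F x) - F((1-s0)/w)/w) (at s0)"
proof -
  have F1: "continuous_on UNIV (\<lambda>x. x * F x)" by (intro continuous_intros F)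
  have F2: "continuous_on UNIV (\<lambda>x. x^2 * F x)" by (intro continuous_intros F)
  note d0 = vlim_deriv[OF F w, of s0]
  note d1 = vlim_deriv[OF F1 w, of s0]
  note d2 = vlim_deriv[OF F2 w, of s0]
  have Dlin: "((\<lambda>s. 2*w * s) has_real_derivative 2*w) (at s0)"
    using DERIV_cmult[OF DERIV_ident, of "2*w"] by simp
  have Dsq: "((\<lambda>s. s^2) has_real_derivative 2* s0) (at s0)"
    by (auto intro!: derivative_eq_intros)
  note D = DERIV_add[OF DERIV_add[OF DERIV_cmult[OF d2, of "w^2"] DERIV_mult[OF Dlin d1]] DERIV_mult[OF Dsq d0]]
  define l where "l = -s0/w"
  define r where "r = (1-s0)/w"
  define I0 where "I0 = integral {l..r} F"
  define I1 where "I1 = integral {l..r} (\<lambda>x. x * F x)"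
  define Fl where "Fl = F l"
  define Fr where "Fr = F r"
  have wl: "w * l = - s0" using w by (simp add: l_def)
  have wr: "w * r = 1 - s0" using w by (simp add: r_def)
  have e: "w\<^sup>2 * ((l\<^sup>2 * Fl - r\<^sup>2 * Fr) / w) + (2 * w * I1 + (l * Fl - r * Fr) / w * (2 * w * s0)) +
    (2 * s0 * I0 + (Fl - Fr) / w * s0\<^sup>2) = 2 * (w * I1 + s0 * I0) - Fr / w"
  proof -
    have "w\<^sup>2 * ((l\<^sup>2 * Fl - r\<^sup>2 * Fr) / w) + (l * Fl - r * Fr) / w * (2 * w * s0) + (Fl - Fr) / w * s0\<^sup>2
        = (Fl * (w*l + s0)^2 - Fr * (w*r+s0)^2) / w"
      using w by (simp add: field_simps power2_eq_square)
    also have "\<dots> = - Fr / w" by (simp add: wl wr)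
    finally show ?thesis by (simp add: algebra_simps)
  qed
  have "(\<lambda>s. integral {-s/w..(1-s)/w} (\<lambda>x. (w*x+s)^2 * F x)) = (\<lambda>s. w^2 * integral {-s/w..(1-s)/w} (\<lambda>x. x^2 * F x) + (2*w * s) * integral {-s/w..(1-s)/w} (\<lambda>x. x * F x) + s^2 * integral {-s/w..(1-s)/w} F)"
    by (simp add: int_sq[OF F])
  moreover have "2 * integral {-s0/w..(1-s0)/w} (\<lambda>x. (w*x+s0) * F x) - F((1-s0)/w)/w = 2 * (w * I1 + s0 * I0) - Fr / w"
    by (simp add: int_lin[OF F] I0_def I1_def Fr_def l_def r_def)
  ultimately show ?thesis using D unfolding l_def[symmetric] r_def[symmetric] I0_def[symmetric] I1_def[symmetric] Fl_def[symmetric] Fr_def[symmetric] e by simp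
qed

lemma clip_cont: "continuous_on S clip"
  unfolding clip_def by (intro continuous_intros)

lemma clip_cont_comp[continuous_intros]: "continuous_on S g \<Longrightarrow> continuous_on S (\<lambda>x. clip (g x))"
  using continuous_on_compose2[OF clip_cont[of UNIV] _ subset_UNIV] by blast

lemma clip0: "y \<le> 0 \<Longrightarrow> clip y = 0" by (simp add: clip_def)
lemma clip1: "y \<ge> 1 \<Longrightarrow> clip y = 1" by (simp add: clip_def)
lemma clipid: "0 \<le> y \<Longrightarrow> y \<le> 1 \<Longrightarrow> clip y = y" by (simp add: clip_def)
lemma clip_mono: "y \<le> z \<Longrightarrow> clip y \<le> clip z" by (simp add: clip_def)

lemma clip_split:
  fixes F K :: "real \<Rightarrow> real"
  assumes F: "continuous_on UNIV F" and K: "continuous_on UNIV K" and w: "w > 0"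
    and A: "A \<le> -s/w" and B: "(1-s)/w \<le> B"
  shows "integral {A..B} (\<lambda>x. K (clip (w*x+s)) * F x) =
     K 0 * integral {A..-s/w} F + integral {-s/w..(1-s)/w} (\<lambda>x. K (w*x+s) * F x) + K 1 * integral {(1-s)/w..B} F"
proof -
  define G where "G = (\<lambda>x. K (clip (w*x+s)) * F x)"
  have G: "continuous_on UNIV G" unfolding G_def
    by (intro continuous_intros F continuous_on_compose2[OF K _ subset_UNIV])
  have lr: "-s/w \<le> (1-s)/w" using w by (simp add: divide_simps)
  have "integral {A..B} G = integral {A..-s/w} G + integral {-s/w..B} G"
    using A lr B by (intro Henstock_Kurzweil_Integration.integral_combine[symmetric] cint G) auto
  moreover have "integral {-s/w..B} G = integral {-s/w..(1-s)/w} G + integral {(1-s)/w..B} G"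
    using A lr B by (intro Henstock_Kurzweil_Integration.integral_combine[symmetric] cint G) auto
  moreover have "integral {A..-s/w} G = integral {A..-s/w} (\<lambda>x. K 0 * F x)"
  proof (rule integral_cong)
    fix x assume "x \<in> {A..-s/w}"
    then have "w*x+s \<le> 0" using w by (auto simp: field_simps)
    then show "G x = K 0 * F x" by (simp add: G_def clip0)
  qed
  moreover have "integral {-s/w..(1-s)/w} G = integral {-s/w..(1-s)/w} (\<lambda>x. K (w*x+s) * F x)"
  proof (rule integral_cong)
    fix x assume "x \<in> {-s/w..(1-s)/w}"
    then have "0 \<le> w*x+s" "w*x+s \<le> 1" using w by (auto simp: field_simps)
    then show "G x = K (w*x+s) * F x" by (simp add: G_def clipid)
  qed
  moreover have "integral {(1-s)/w..B} G = integral {(1-s)/w..B} (\<lambda>x. K 1 * F x)"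
  proof (rule integral_cong)
    fix x assume "x \<in> {(1-s)/w..B}"
    then have "w*x+s \<ge> 1" using w by (auto simp: field_simps)
    then show "G x = K 1 * F x" by (simp add: G_def clip1)
  qed
  ultimately show ?thesis unfolding G_def by simp
qed

lemma ext_int:
  fixes G :: "real \<Rightarrow> real"
  assumes G: "continuous_on UNIV G" and Z: "\<And>x. x \<notin> {a<..<b} \<Longrightarrow> G x = 0"
    and "A \<le> a" "a \<le> b" "b \<le> B"
  shows "integral {A..B} G = integral {a..b} G"
proof -
  have "integral {A..B} G = integral {A..a} G + integral {a..B} G"
    using assms by (intro Henstock_Kurzweil_Integration.integral_combine[symmetric] cint G) auto
  moreover have "integral {a..B} G = integral {a..b} G + integral {b..B} G"
    using assms by (intro Henstock_Kurzweil_Integration.integral_combine[symmetric] cint G) auto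
  moreover have "integral {A..a} G = integral {A..a} (\<lambda>x. 0)"
    by (rule integral_cong) (auto intro: Z)
  moreover have "integral {b..B} G = integral {b..B} (\<lambda>x. 0)"
    by (rule integral_cong) (auto intro: Z)
  ultimately show ?thesis by simp
qed

lemma near_bounds:
  fixes w s s0 :: real
  assumes w: "w > 0" and "s0 - w < s" "s < s0 + w"
  shows "-s0/w - 1 \<le> -s/w" "(1-s)/w \<le> (1-s0)/w + 1"
proof -
  have "s/w \<le> (s0+w)/w" using assms by (intro divide_right_mono) auto
  then show "-s0/w - 1 \<le> -s/w" using w by (simp add: add_divide_distrib)
  have "(1-s)/w \<le> (1-s0+w)/w" using assms by (intro divide_right_mono) auto
  then show "(1-s)/w \<le> (1-s0)/w + 1" using w by (simp add: add_divide_distrib diff_divide_distrib)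
qed

lemma psi_deriv_gen:
  fixes F K :: "real \<Rightarrow> real"
  assumes F: "continuous_on UNIV F" and K: "continuous_on UNIV K" and w: "w > 0"
    and Z: "\<And>x. x \<notin> {a<..<b} \<Longrightarrow> F x = 0" and ab: "a \<le> b" and K0: "K 0 = 0"
    and DM: "((\<lambda>s. integral {-s/w..(1-s)/w} (\<lambda>x. K (w*x+s) * F x)) has_real_derivative M) (at s0)"
  shows "((\<lambda>s. integral {a..b} (\<lambda>x. K (clip (w*x+s)) * F x)) has_real_derivative M + K 1 * F ((1-s0)/w) / w) (at s0)"
proof -
  define A where "A = min a (-s0/w - 1)"
  define B where "B = max b ((1-s0)/w + 1)"
  let ?S = "{s0-w<..<s0+w}"
  have opS: "open ?S" by simp
  have eq: "integral {-s/w..(1-s)/w} (\<lambda>x. K (w*x+s) * F x) + K 1 * (integral {A..B} F - integral {A..(1-s)/w} F)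
     = integral {a..b} (\<lambda>x. K (clip (w*x+s)) * F x)" if "s \<in> ?S" for s
  proof -
    have b1: "A \<le> -s/w" "(1-s)/w \<le> B" using near_bounds[OF w, of s0 s] that unfolding A_def B_def by auto
    have lr: "-s/w \<le> (1-s)/w" using w by (simp add: divide_simps)
    have "integral {a..b} (\<lambda>x. K (clip (w*x+s)) * F x) = integral {A..B} (\<lambda>x. K (clip (w*x+s)) * F x)"
      by (rule ext_int[symmetric]) (use Z ab in \<open>auto simp: A_def B_def intro!: continuous_intros F continuous_on_compose2[OF K _ subset_UNIV]\<close>)
    also have "\<dots> = K 0 * integral {A..-s/w} F + integral {-s/w..(1-s)/w} (\<lambda>x. K (w*x+s) * F x) + K 1 * integral {(1-s)/w..B} F"
      by (rule clip_split[OF F K w b1])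
    also have "integral {(1-s)/w..B} F = integral {A..B} F - integral {A..(1-s)/w} F"
      using b1 lr by (intro int_split F) auto
    finally show ?thesis by (simp add: K0)
  qed
  have Dr: "((\<lambda>s. integral {A..(1-s)/w} F) has_real_derivative F ((1-s0)/w) * (-1/w)) (at s0)"
  proof (rule DERIV_chain2[where f="\<lambda>y. integral {A..y} F"])
    have "-s0/w - 1 < (1-s0)/w" using w by (simp add: divide_simps)
    then have "A < (1-s0)/w" by (simp add: A_def)
    then show "((\<lambda>y. integral {A..y} F) has_real_derivative F ((1-s0)/w)) (at ((1-s0)/w))"
      by (intro anti_deriv F)
    show "((\<lambda>s. (1-s)/w) has_real_derivative (-1/w)) (at s0)"
      using w by (auto intro!: derivative_eq_intros simp: field_simps)
  qed
  note D = DERIV_add[OF DM DERIV_cmult[OF DERIV_diff[OF DERIV_const Dr], of "K 1"]]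
  have e: "M + K 1 * (0 - F ((1-s0)/w) * (-1/w)) = M + K 1 * F ((1-s0)/w) / w"
    by simp
  show ?thesis
    by (rule has_field_derivative_transform_within_open[OF D[unfolded e] opS]) (use eq w in auto)
qed

lemma psi1_deriv:
  fixes F :: "real \<Rightarrow> real"
  assumes F: "continuous_on UNIV F" and w: "w > 0"
    and Z: "\<And>x. x \<notin> {a<..<b} \<Longrightarrow> F x = 0" and ab: "a \<le> b"
  shows "((\<lambda>s. integral {a..b} (\<lambda>x. clip (w*x+s) * F x)) has_real_derivative integral {-s0/w..(1-s0)/w} F) (at s0)"
proof -
  have "((\<lambda>s. integral {a..b} (\<lambda>x. (\<lambda>y. y) (clip (w*x+s)) * F x)) has_real_derivative
     (integral {-s0/w..(1-s0)/w} F - F((1-s0)/w)/w) + (\<lambda>y. y) 1 * F ((1-s0)/w) / w) (at s0)"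
    by (rule psi_deriv_gen[where K="\<lambda>y. y", OF F _ w Z ab _ vlim_lin_deriv[OF F w]]) (auto intro: continuous_intros)
  then show ?thesis by simp
qed

lemma psi2_deriv:
  fixes F :: "real \<Rightarrow> real"
  assumes F: "continuous_on UNIV F" and w: "w > 0"
    and Z: "\<And>x. x \<notin> {a<..<b} \<Longrightarrow> F x = 0" and ab: "a \<le> b"
  shows "((\<lambda>s. integral {a..b} (\<lambda>x. (clip (w*x+s))^2 * F x)) has_real_derivative 2 * integral {-s0/w..(1-s0)/w} (\<lambda>x. (w*x+s0) * F x)) (at s0)"
proof -
  have "((\<lambda>s. integral {a..b} (\<lambda>x. (\<lambda>y. y^2) (clip (w*x+s)) * F x)) has_real_derivative
     (2 * integral {-s0/w..(1-s0)/w} (\<lambda>x. (w*x+s0) * F x) - F((1-s0)/w)/w) + (\<lambda>y. y^2) 1 * F ((1-s0)/w) / w) (at s0)"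
    by (rule psi_deriv_gen[where K="\<lambda>y. y^2", OF F _ w Z ab _ vlim_sq_deriv[OF F w]]) (auto intro: continuous_intros)
  then show ?thesis by simp
qed



lemma partial_hess_ii:
  assumes d1: "\<And>s. ((\<lambda>t. F (\<theta>(i:=t))) has_real_derivative g1 s) (at s)"
    and d2: "\<And>s. (g1 has_real_derivative g2 s) (at s)"
  shows "partial F i \<theta> = g1 (\<theta> i)" "hess F \<theta> i i = g2 (\<theta> i)"
proof -
  show "partial F i \<theta> = g1 (\<theta> i)" unfolding partial_def by (rule DERIV_imp_deriv[OF d1])
  have "(\<lambda>t. partial F i (\<theta>(i:=t))) = g1"
  proof
    fix t
    have "partial F i (\<theta>(i:=t)) = deriv (\<lambda>s. F (\<theta>(i:=s))) t" unfolding partial_def by simp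
    also have "\<dots> = g1 t" by (rule DERIV_imp_deriv[OF d1])
    finally show "partial F i (\<theta>(i:=t)) = g1 t" .
  qed
  then show "hess F \<theta> i i = g2 (\<theta> i)" unfolding hess_def partial_def[of "partial F i"]
    using DERIV_imp_deriv[OF d2] by simp
qed

lemma NN_upd:
  assumes i: "i \<in> {1..h}"
  shows "NN h v w (\<theta>(i:=s)) x = (\<theta> (h+1) + (\<Sum>j\<in>{1..h}-{i}. v j * clip (w j * x + \<theta> j))) + v i * clip (w i * x + s)"
proof -
  have "(\<Sum>j=1..h. v j * clip (w j * x + (\<theta>(i:=s)) j)) = v i * clip (w i * x + (\<theta>(i:=s)) i) + (\<Sum>j\<in>{1..h}-{i}. v j * clip (w j * x + (\<theta>(i:=s)) j))"
    using i by (intro sum.remove) auto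
  also have "(\<Sum>j\<in>{1..h}-{i}. v j * clip (w j * x + (\<theta>(i:=s)) j)) = (\<Sum>j\<in>{1..h}-{i}. v j * clip (w j * x + \<theta> j))"
    by (intro sum.cong) auto
  finally show ?thesis using i unfolding NN_def by simp
qed

lemma risk_upd:
  fixes f p :: "real \<Rightarrow> real" and v w \<theta> :: "nat \<Rightarrow> real"
  assumes i: "i \<in> {1..h}" and f: "continuous_on UNIV f" and p: "continuous_on UNIV p"
  defines "R \<equiv> (\<lambda>x. \<theta> (h+1) + (\<Sum>j\<in>{1..h}-{i}. v j * clip (w j * x + \<theta> j)) - f x)"
  shows "risk a b h v w f p (\<theta>(i:=s)) = integral {a..b} (\<lambda>x. (R x)^2 * p x)
     + 2 * v i * integral {a..b} (\<lambda>x. clip (w i * x + s) * (R x * p x))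
     + (v i)^2 * integral {a..b} (\<lambda>x. (clip (w i * x + s))^2 * p x)"
proof -
  have Rc: "continuous_on UNIV R" unfolding R_def by (intro continuous_intros f)
  have "(\<lambda>x. (NN h v w (\<theta>(i:=s)) x - f x)^2 * p x) =
     (\<lambda>x. ((R x)^2 * p x + (2 * v i) * (clip (w i * x + s) * (R x * p x))) + (v i)^2 * ((clip (w i * x + s))^2 * p x))"
    by (rule ext) (simp add: NN_upd[OF i] R_def power2_eq_square algebra_simps)
  moreover have "integral {a..b} (\<lambda>x. ((R x)^2 * p x + (2 * v i) * (clip (w i * x + s) * (R x * p x))) + (v i)^2 * ((clip (w i * x + s))^2 * p x))
    = integral {a..b} (\<lambda>x. (R x)^2 * p x + (2 * v i) * (clip (w i * x + s) * (R x * p x))) + integral {a..b} (\<lambda>x. (v i)^2 * ((clip (w i * x + s))^2 * p x))"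
    by (rule integral_add) (intro cint continuous_intros Rc p)+
  moreover have "integral {a..b} (\<lambda>x. (R x)^2 * p x + (2 * v i) * (clip (w i * x + s) * (R x * p x)))
    = integral {a..b} (\<lambda>x. (R x)^2 * p x) + integral {a..b} (\<lambda>x. (2 * v i) * (clip (w i * x + s) * (R x * p x)))"
    by (rule integral_add) (intro cint continuous_intros Rc p)+
  ultimately show ?thesis unfolding risk_def by simp
qed

lemma risk_FD:
  fixes f p :: "real \<Rightarrow> real" and v w \<theta> :: "nat \<Rightarrow> real"
  assumes i: "i \<in> {1..h}" and wi: "w i > 0" and f: "continuous_on UNIV f" and p: "continuous_on UNIV p"
    and Z: "\<And>x. x \<notin> {a<..<b} \<Longrightarrow> p x = 0" and ab: "a \<le> b"
  defines "R \<equiv> (\<lambda>x. \<theta> (h+1) + (\<Sum>j\<in>{1..h}-{i}. v j * clip (w j * x + \<theta> j)) - f x)"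
  shows "partial (risk a b h v w f p) i \<theta> = 2 * v i * integral {-\<theta> i/w i..(1-\<theta> i)/w i} (\<lambda>x. R x * p x)
            + (v i)^2 * (2 * integral {-\<theta> i/w i..(1-\<theta> i)/w i} (\<lambda>x. (w i * x + \<theta> i) * p x))"
    "hess (risk a b h v w f p) \<theta> i i = 2 * v i * ((R (-\<theta> i/w i) * p (-\<theta> i/w i) - R ((1-\<theta> i)/w i) * p ((1-\<theta> i)/w i)) / w i)
            + (v i)^2 * (2 * (integral {-\<theta> i/w i..(1-\<theta> i)/w i} p - p ((1-\<theta> i)/w i) / w i))"
proof -
  have Rc: "continuous_on UNIV R" unfolding R_def by (intro continuous_intros f)
  have RPc: "continuous_on UNIV (\<lambda>x. R x * p x)" by (intro continuous_intros Rc p)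
  have RZ: "\<And>x. x \<notin> {a<..<b} \<Longrightarrow> R x * p x = 0" using Z by simp
  define g1 where "g1 = (\<lambda>s. 2 * v i * integral {-s/w i..(1-s)/w i} (\<lambda>x. R x * p x)
            + (v i)^2 * (2 * integral {-s/w i..(1-s)/w i} (\<lambda>x. (w i * x + s) * p x)))"
  define g2 where "g2 = (\<lambda>s. 2 * v i * ((R (-s/w i) * p (-s/w i) - R ((1-s)/w i) * p ((1-s)/w i)) / w i)
            + (v i)^2 * (2 * (integral {-s/w i..(1-s)/w i} p - p ((1-s)/w i) / w i)))"
  have d1: "((\<lambda>t. risk a b h v w f p (\<theta>(i:=t))) has_real_derivative g1 s) (at s)" for s
  proof -
    have e: "(\<lambda>t. risk a b h v w f p (\<theta>(i:=t))) = (\<lambda>t. integral {a..b} (\<lambda>x. (R x)^2 * p x)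
     + 2 * v i * integral {a..b} (\<lambda>x. clip (w i * x + t) * (R x * p x))
     + (v i)^2 * integral {a..b} (\<lambda>x. (clip (w i * x + t))^2 * p x))"
      unfolding R_def by (rule ext) (rule risk_upd[OF i f p])
    have P1: "((\<lambda>t. integral {a..b} (\<lambda>x. clip (w i * x + t) * (R x * p x))) has_real_derivative integral {-s/w i..(1-s)/w i} (\<lambda>x. R x * p x)) (at s)"
      by (rule psi1_deriv[OF RPc wi RZ ab])
    have P2: "((\<lambda>t. integral {a..b} (\<lambda>x. (clip (w i * x + t))^2 * p x)) has_real_derivative 2 * integral {-s/w i..(1-s)/w i} (\<lambda>x. (w i * x + s) * p x)) (at s)"
      by (rule psi2_deriv[OF p wi Z ab])
    note D = DERIV_add[OF DERIV_add[OF DERIV_const DERIV_cmult[OF P1, where c="2 * v i"]] DERIV_cmult[OF P2, where c="(v i)^2"]]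
    show ?thesis unfolding e g1_def using D by simp
  qed
  have d2: "(g1 has_real_derivative g2 s) (at s)" for s
    unfolding g1_def g2_def
    by (intro DERIV_add DERIV_cmult vlim_deriv[OF RPc wi] vlim_lin_deriv[OF p wi])
  show "partial (risk a b h v w f p) i \<theta> = 2 * v i * integral {-\<theta> i/w i..(1-\<theta> i)/w i} (\<lambda>x. R x * p x)
            + (v i)^2 * (2 * integral {-\<theta> i/w i..(1-\<theta> i)/w i} (\<lambda>x. (w i * x + \<theta> i) * p x))"
    using partial_hess_ii(1)[OF d1 d2] unfolding g1_def by simp
  show "hess (risk a b h v w f p) \<theta> i i = 2 * v i * ((R (-\<theta> i/w i) * p (-\<theta> i/w i) - R ((1-\<theta> i)/w i) * p ((1-\<theta> i)/w i)) / w i)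
            + (v i)^2 * (2 * (integral {-\<theta> i/w i..(1-\<theta> i)/w i} p - p ((1-\<theta> i)/w i) / w i))"
    using partial_hess_ii(2)[OF d1 d2] unfolding g2_def by simp
qed



lemma int_pos:
  fixes F :: "real \<Rightarrow> real"
  assumes cd: "c < d" and F: "continuous_on {c..d} F" and nn: "\<And>t. t \<in> {c..d} \<Longrightarrow> F t \<ge> 0"
    and m: "m \<in> {c..d}" "F m > 0"
  shows "integral {c..d} F > 0"
proof -
  have I: "F integrable_on {c..d}" by (rule integrable_continuous_interval[OF F])
  have "integral {c..d} F \<ge> 0" by (rule integral_nonneg[OF I nn])
  moreover have "integral {c..d} F \<noteq> 0"
  proof
    assume z: "integral {c..d} F = 0"
    have "(F has_integral 0) (cbox c d)" using I z by (metis has_integral_integral interval_cbox)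
    from has_integral_0_cbox_imp_0[OF _ _ this, of m] F nn m cd show False
      by (auto simp: interval_cbox[symmetric])
  qed
  ultimately show ?thesis by simp
qed

lemma main_ineq:
  fixes g q :: "real \<Rightarrow> real" and c d \<kappa> \<sigma> :: real
  assumes cd: "c < d" and g: "continuous_on {c..d} g" and q: "continuous_on {c..d} q"
    and qnn: "\<And>t. t \<in> {c..d} \<Longrightarrow> q t \<ge> 0"
    and F1: "integral {c..d} (\<lambda>t. g t * q t) = 0"
    and F2: "g d * q d - g c * q c \<le> \<kappa> * integral {c..d} q"
    and sl: "\<And>x y. c \<le> x \<Longrightarrow> x \<le> y \<Longrightarrow> y \<le> d \<Longrightarrow> g y - g x \<ge> \<sigma> * (y - x)"
    and \<sigma>: "\<sigma> \<ge> 0" and Qpos: "integral {c..d} q > 0"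
    and V: "q d * integral {c..d} (\<lambda>t. (d - t) * q t) + q c * integral {c..d} (\<lambda>t. (t - c) * q t) \<ge> (integral {c..d} q)^2 / 2"
  shows "\<sigma> \<le> 2 * \<kappa>"
proof -
  define Q where "Q = integral {c..d} q"
  define Ar where "Ar = integral {c..d} (\<lambda>t. (d - t) * q t)"
  define Al where "Al = integral {c..d} (\<lambda>t. (t - c) * q t)"
  have Iq: "q integrable_on {c..d}" by (rule integrable_continuous_interval[OF q])
  have Ir: "(\<lambda>t. (d - t) * q t) integrable_on {c..d}" by (intro integrable_continuous_interval continuous_intros q)
  have Il: "(\<lambda>t. (t - c) * q t) integrable_on {c..d}" by (intro integrable_continuous_interval continuous_intros q)
  have Igq: "(\<lambda>t. g t * q t) integrable_on {c..d}" by (intro integrable_continuous_interval continuous_intros q g)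
  have c_in: "c \<in> {c..d}" and d_in: "d \<in> {c..d}" using cd by auto
  have h1: "g d * Q - \<sigma> * Ar \<ge> 0"
  proof -
    have "integral {c..d} (\<lambda>t. g t * q t) \<le> integral {c..d} (\<lambda>t. g d * q t - \<sigma> * ((d - t) * q t))"
    proof (rule integral_le[OF Igq])
      show "(\<lambda>t. g d * q t - \<sigma> * ((d - t) * q t)) integrable_on {c..d}"
        by (intro integrable_continuous_interval continuous_intros q)
      fix t assume t: "t \<in> {c..d}"
      have "g t \<le> g d - \<sigma> * (d - t)" using sl[of t d] t by auto
      then have "g t * q t \<le> (g d - \<sigma> * (d - t)) * q t" using qnn[OF t] by (rule mult_right_mono)
      then show "g t * q t \<le> g d * q t - \<sigma> * ((d - t) * q t)" by (simp add: algebra_simps)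
    qed
    also have "\<dots> = g d * Q - \<sigma> * Ar"
      unfolding Q_def Ar_def by (subst integral_diff) (auto intro!: integrable_continuous_interval continuous_intros q)
    finally show ?thesis using F1 by simp
  qed
  have h2: "- g c * Q - \<sigma> * Al \<ge> 0"
  proof -
    have "integral {c..d} (\<lambda>t. g c * q t + \<sigma> * ((t - c) * q t)) \<le> integral {c..d} (\<lambda>t. g t * q t)"
    proof (rule integral_le[OF _ Igq])
      show "(\<lambda>t. g c * q t + \<sigma> * ((t - c) * q t)) integrable_on {c..d}"
        by (intro integrable_continuous_interval continuous_intros q)
      fix t assume t: "t \<in> {c..d}"
      have "g c + \<sigma> * (t - c) \<le> g t" using sl[of c t] t by auto
      then have "(g c + \<sigma> * (t - c)) * q t \<le> g t * q t" using qnn[OF t] by (rule mult_right_mono)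
      then show "g c * q t + \<sigma> * ((t - c) * q t) \<le> g t * q t" by (simp add: algebra_simps)
    qed
    moreover have "integral {c..d} (\<lambda>t. g c * q t + \<sigma> * ((t - c) * q t)) = g c * Q + \<sigma> * Al"
      unfolding Q_def Al_def by (subst integral_add) (auto intro!: integrable_continuous_interval continuous_intros q)
    ultimately show ?thesis using F1 by simp
  qed
  have qd: "q d \<ge> 0" and qc: "q c \<ge> 0" using qnn c_in d_in by auto
  have "\<kappa> * Q * Q \<ge> (g d * q d - g c * q c) * Q"
    using F2 Qpos unfolding Q_def by (intro mult_right_mono) auto
  also have "(g d * q d - g c * q c) * Q = q d * (g d * Q) + q c * (- g c * Q)" by (simp add: algebra_simps)
  also have "\<dots> \<ge> q d * (\<sigma> * Ar) + q c * (\<sigma> * Al)"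
    using h1 h2 qd qc by (intro add_mono mult_left_mono) auto
  finally have "\<sigma> * (q d * Ar + q c * Al) \<le> \<kappa> * Q * Q" by (simp add: algebra_simps)
  moreover have "\<sigma> * (Q^2/2) \<le> \<sigma> * (q d * Ar + q c * Al)"
    using V \<sigma> unfolding Q_def Ar_def Al_def by (intro mult_left_mono) auto
  ultimately have "\<sigma> * (Q * Q) \<le> (2 * \<kappa>) * (Q * Q)" by (simp add: power2_eq_square algebra_simps)
  moreover have "Q * Q > 0" using Qpos unfolding Q_def by simp
  ultimately show ?thesis by (meson mult_le_cancel_right_pos)
qed

lemma int_lin_piece:
  fixes u z :: real
  assumes "u \<le> z"
  shows "integral {u..z} (\<lambda>t. t - u) = (z - u)^2 / 2" "integral {u..z} (\<lambda>t. z - t) = (z - u)^2 / 2"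
proof -
  have I: "(\<lambda>t. t) integrable_on {u..z}" "(\<lambda>t. u) integrable_on {u..z}" "(\<lambda>t. z) integrable_on {u..z}"
    by (auto intro: ident_integrable_on)
  show "integral {u..z} (\<lambda>t. t - u) = (z - u)^2 / 2"
    using assms by (simp add: integral_diff[OF I(1,2)] power2_eq_square field_simps)
  show "integral {u..z} (\<lambda>t. z - t) = (z - u)^2 / 2"
    using assms by (simp add: integral_diff[OF I(3,1)] power2_eq_square field_simps)
qed

lemma tub_right:
  fixes c d \<mu> :: real
  assumes "0 \<le> \<mu>" "\<mu> \<le> d - c"
  shows "integral {c..d} (\<lambda>t. max 0 (\<mu> - (d - t))) = \<mu>^2 / 2"
proof -
  have G: "continuous_on UNIV (\<lambda>t::real. max 0 (\<mu> - (d - t)))" by (intro continuous_intros)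
  have "integral {c..d} (\<lambda>t. max 0 (\<mu> - (d - t))) = integral {c..d-\<mu>} (\<lambda>t. max 0 (\<mu> - (d - t))) + integral {d-\<mu>..d} (\<lambda>t. max 0 (\<mu> - (d - t)))"
    using assms by (intro Henstock_Kurzweil_Integration.integral_combine[symmetric] cint G) auto
  moreover have "integral {c..d-\<mu>} (\<lambda>t. max 0 (\<mu> - (d - t))) = integral {c..d-\<mu>} (\<lambda>t. 0)"
    by (rule integral_cong) auto
  moreover have "integral {d-\<mu>..d} (\<lambda>t. max 0 (\<mu> - (d - t))) = integral {d-\<mu>..d} (\<lambda>t. t - (d - \<mu>))"
    by (rule integral_cong) auto
  moreover have "integral {d-\<mu>..d} (\<lambda>t. t - (d - \<mu>)) = \<mu>^2/2"
    using int_lin_piece(1)[of "d-\<mu>" d] assms by simp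
  ultimately show ?thesis by simp
qed

lemma tub_left:
  fixes c d \<mu> :: real
  assumes "0 \<le> \<mu>" "\<mu> \<le> d - c"
  shows "integral {c..d} (\<lambda>t. max 0 (\<mu> - (t - c))) = \<mu>^2 / 2"
proof -
  have G: "continuous_on UNIV (\<lambda>t::real. max 0 (\<mu> - (t - c)))" by (intro continuous_intros)
  have "integral {c..d} (\<lambda>t. max 0 (\<mu> - (t - c))) = integral {c..c+\<mu>} (\<lambda>t. max 0 (\<mu> - (t - c))) + integral {c+\<mu>..d} (\<lambda>t. max 0 (\<mu> - (t - c)))"
    using assms by (intro Henstock_Kurzweil_Integration.integral_combine[symmetric] cint G) auto
  moreover have "integral {c+\<mu>..d} (\<lambda>t. max 0 (\<mu> - (t - c))) = integral {c+\<mu>..d} (\<lambda>t. 0)"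
    by (rule integral_cong) auto
  moreover have "integral {c..c+\<mu>} (\<lambda>t. max 0 (\<mu> - (t - c))) = integral {c..c+\<mu>} (\<lambda>t. (c + \<mu>) - t)"
    by (rule integral_cong) auto
  moreover have "integral {c..c+\<mu>} (\<lambda>t. (c + \<mu>) - t) = \<mu>^2/2"
    using int_lin_piece(2)[of c "c+\<mu>"] assms by simp
  ultimately show ?thesis by simp
qed

lemma bathtub:
  fixes q e :: "real \<Rightarrow> real" and c d qm :: real
  assumes cd: "c \<le> d" and q: "continuous_on {c..d} q" and e: "continuous_on {c..d} e"
    and qnn: "\<And>t. t \<in> {c..d} \<Longrightarrow> 0 \<le> q t" and qle: "\<And>t. t \<in> {c..d} \<Longrightarrow> q t \<le> qm"
    and enn: "\<And>t. t \<in> {c..d} \<Longrightarrow> 0 \<le> e t" and qm: "qm > 0"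
    and T: "integral {c..d} (\<lambda>t. max 0 (integral {c..d} q / qm - e t)) = (integral {c..d} q / qm)^2 / 2"
  shows "qm * integral {c..d} (\<lambda>t. e t * q t) \<ge> (integral {c..d} q)^2 / 2"
proof -
  define Q where "Q = integral {c..d} q"
  define \<mu> where "\<mu> = Q / qm"
  have Iq: "q integrable_on {c..d}" by (rule integrable_continuous_interval[OF q])
  have "integral {c..d} (\<lambda>t. \<mu> * q t - qm * max 0 (\<mu> - e t)) \<le> integral {c..d} (\<lambda>t. e t * q t)"
  proof (rule integral_le)
    show "(\<lambda>t. \<mu> * q t - qm * max 0 (\<mu> - e t)) integrable_on {c..d}"
      by (intro integrable_continuous_interval continuous_intros q e)
    show "(\<lambda>t. e t * q t) integrable_on {c..d}"
      by (intro integrable_continuous_interval continuous_intros q e)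
    fix t assume t: "t \<in> {c..d}"
    show "\<mu> * q t - qm * max 0 (\<mu> - e t) \<le> e t * q t"
    proof (cases "e t \<ge> \<mu>")
      case True
      then have "\<mu> * q t \<le> e t * q t" using qnn[OF t] by (rule mult_right_mono)
      then show ?thesis using True by simp
    next
      case False
      have "0 \<le> (\<mu> - e t) * (qm - q t)" using False qle[OF t] by simp
      then show ?thesis using False by (simp add: algebra_simps)
    qed
  qed
  moreover have "integral {c..d} (\<lambda>t. \<mu> * q t - qm * max 0 (\<mu> - e t)) = \<mu> * Q - qm * (\<mu>^2/2)"
  proof -
    have "integral {c..d} (\<lambda>t. \<mu> * q t - qm * max 0 (\<mu> - e t)) = integral {c..d} (\<lambda>t. \<mu> * q t) - integral {c..d} (\<lambda>t. qm * max 0 (\<mu> - e t))"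
      by (rule integral_diff) (intro integrable_continuous_interval continuous_intros q e)+
    then show ?thesis using T unfolding Q_def \<mu>_def by simp
  qed
  moreover have "\<mu> * Q - qm * (\<mu>^2/2) = Q^2 / (2 * qm)"
    using qm unfolding \<mu>_def by (simp add: field_simps power2_eq_square)
  ultimately have "Q^2 / (2 * qm) \<le> integral {c..d} (\<lambda>t. e t * q t)" by simp
  then have "qm * (Q^2 / (2 * qm)) \<le> qm * integral {c..d} (\<lambda>t. e t * q t)"
    using qm by (intro mult_left_mono) auto
  then show ?thesis using qm unfolding Q_def by simp
qed

lemma Q_bounds:
  fixes q :: "real \<Rightarrow> real"
  assumes cd: "c \<le> d" and q: "continuous_on {c..d} q"
    and qnn: "\<And>t. t \<in> {c..d} \<Longrightarrow> 0 \<le> q t" and qle: "\<And>t. t \<in> {c..d} \<Longrightarrow> q t \<le> qm"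
  shows "0 \<le> integral {c..d} q" "integral {c..d} q \<le> qm * (d - c)"
proof -
  have Iq: "q integrable_on {c..d}" by (rule integrable_continuous_interval[OF q])
  show "0 \<le> integral {c..d} q" by (rule integral_nonneg[OF Iq qnn])
  have "integral {c..d} q \<le> integral {c..d} (\<lambda>t. qm)"
    by (rule integral_le[OF Iq]) (auto intro: qle)
  then show "integral {c..d} q \<le> qm * (d - c)" using cd by (simp add: mult.commute)
qed

lemma weights_nonneg:
  fixes q :: "real \<Rightarrow> real"
  assumes q: "continuous_on {c..d} q" and qnn: "\<And>t. t \<in> {c..d} \<Longrightarrow> 0 \<le> q t"
  shows "0 \<le> integral {c..d} (\<lambda>t. (d - t) * q t)" "0 \<le> integral {c..d} (\<lambda>t. (t - c) * q t)"
  by (rule integral_nonneg, intro integrable_continuous_interval continuous_intros q, simp add: qnn)+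

lemma condV_B:
  fixes q :: "real \<Rightarrow> real"
  assumes cd: "c \<le> d" and q: "continuous_on {c..d} q"
    and qnn: "\<And>t. t \<in> {c..d} \<Longrightarrow> 0 \<le> q t" and qle: "\<And>t. t \<in> {c..d} \<Longrightarrow> q t \<le> q d"
  shows "q d * integral {c..d} (\<lambda>t. (d - t) * q t) + q c * integral {c..d} (\<lambda>t. (t - c) * q t) \<ge> (integral {c..d} q)^2 / 2"
proof -
  have c_in: "c \<in> {c..d}" "d \<in> {c..d}" using cd by auto
  have W: "0 \<le> integral {c..d} (\<lambda>t. (d - t) * q t)" "0 \<le> integral {c..d} (\<lambda>t. (t - c) * q t)"
    using weights_nonneg[OF q qnn] by auto
  have L: "q c * integral {c..d} (\<lambda>t. (t - c) * q t) \<ge> 0" using W qnn[OF c_in(1)] by simp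
  note QB = Q_bounds[OF cd q qnn qle]
  show ?thesis
  proof (cases "q d = 0")
    case True
    then have "integral {c..d} q = 0" using QB by simp
    then show ?thesis using L True by simp
  next
    case False
    then have qm: "q d > 0" using qnn[OF c_in(2)] by simp
    have "q d * integral {c..d} (\<lambda>t. (d - t) * q t) \<ge> (integral {c..d} q)^2 / 2"
    proof (rule bathtub[OF cd q _ qnn qle _ qm])
      show "continuous_on {c..d} (\<lambda>t. d - t)" by (intro continuous_intros)
      show "\<And>t. t \<in> {c..d} \<Longrightarrow> 0 \<le> d - t" by auto
      show "integral {c..d} (\<lambda>t. max 0 (integral {c..d} q / q d - (d - t))) = (integral {c..d} q / q d)^2 / 2"
        using QB qm by (intro tub_right) (auto simp: divide_simps mult.commute)
    qed
    then show ?thesis using L by simp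
  qed
qed

lemma condV_C:
  fixes q :: "real \<Rightarrow> real"
  assumes cd: "c \<le> d" and q: "continuous_on {c..d} q"
    and qnn: "\<And>t. t \<in> {c..d} \<Longrightarrow> 0 \<le> q t" and qle: "\<And>t. t \<in> {c..d} \<Longrightarrow> q t \<le> q c"
  shows "q d * integral {c..d} (\<lambda>t. (d - t) * q t) + q c * integral {c..d} (\<lambda>t. (t - c) * q t) \<ge> (integral {c..d} q)^2 / 2"
proof -
  have c_in: "c \<in> {c..d}" "d \<in> {c..d}" using cd by auto
  have W: "0 \<le> integral {c..d} (\<lambda>t. (d - t) * q t)" "0 \<le> integral {c..d} (\<lambda>t. (t - c) * q t)"
    using weights_nonneg[OF q qnn] by auto
  have L: "q d * integral {c..d} (\<lambda>t. (d - t) * q t) \<ge> 0" using W qnn[OF c_in(2)] by simp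
  note QB = Q_bounds[OF cd q qnn qle]
  show ?thesis
  proof (cases "q c = 0")
    case True
    then have "integral {c..d} q = 0" using QB by simp
    then show ?thesis using L True by simp
  next
    case False
    then have qm: "q c > 0" using qnn[OF c_in(1)] by simp
    have "q c * integral {c..d} (\<lambda>t. (t - c) * q t) \<ge> (integral {c..d} q)^2 / 2"
    proof (rule bathtub[OF cd q _ qnn qle _ qm])
      show "continuous_on {c..d} (\<lambda>t. t - c)" by (intro continuous_intros)
      show "\<And>t. t \<in> {c..d} \<Longrightarrow> 0 \<le> t - c" by auto
      show "integral {c..d} (\<lambda>t. max 0 (integral {c..d} q / q c - (t - c))) = (integral {c..d} q / q c)^2 / 2"
        using QB qm by (intro tub_left) (auto simp: divide_simps mult.commute)
    qed
    then show ?thesis using L by simp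
  qed
qed

lemma condV_A:
  fixes q :: "real \<Rightarrow> real"
  assumes cd: "c \<le> d" and q: "continuous_on {c..d} q"
    and qnn: "\<And>t. t \<in> {c..d} \<Longrightarrow> 0 \<le> q t"
    and qle1: "\<And>t. t \<in> {c..d} \<Longrightarrow> q t \<le> 2 * q c" and qle2: "\<And>t. t \<in> {c..d} \<Longrightarrow> q t \<le> 2 * q d"
  shows "q d * integral {c..d} (\<lambda>t. (d - t) * q t) + q c * integral {c..d} (\<lambda>t. (t - c) * q t) \<ge> (integral {c..d} q)^2 / 2"
proof -
  define Q where "Q = integral {c..d} q"
  define Ar where "Ar = integral {c..d} (\<lambda>t. (d - t) * q t)"
  define Al where "Al = integral {c..d} (\<lambda>t. (t - c) * q t)"
  define mn where "mn = min (q c) (q d)"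
  have W: "0 \<le> Ar" "0 \<le> Al" using weights_nonneg[OF q qnn] unfolding Ar_def Al_def by auto
  have sum: "Ar + Al = (d - c) * Q"
  proof -
    have "Ar + Al = integral {c..d} (\<lambda>t. (d - t) * q t + (t - c) * q t)"
      unfolding Ar_def Al_def
      by (rule integral_add[symmetric]) (intro integrable_continuous_interval continuous_intros q)+
    also have "\<dots> = integral {c..d} (\<lambda>t. (d - c) * q t)" by (simp add: algebra_simps)
    finally show ?thesis unfolding Q_def by simp
  qed
  have Q1: "Q \<le> 2 * q c * (d - c)" "Q \<le> 2 * q d * (d - c)" "0 \<le> Q"
    using Q_bounds[OF cd q qnn qle1] Q_bounds[OF cd q qnn qle2] unfolding Q_def by auto
  have Qmn: "Q \<le> 2 * mn * (d - c)" using Q1 unfolding mn_def by (simp add: min_def)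
  have "q d * Ar + q c * Al \<ge> mn * Ar + mn * Al"
    using W unfolding mn_def by (intro add_mono mult_right_mono) auto
  also have "mn * Ar + mn * Al = mn * (d - c) * Q"
  proof -
    have "mn * Ar + mn * Al = mn * (Ar + Al)" by (simp add: algebra_simps)
    then show ?thesis using sum by simp
  qed
  finally have A: "q d * Ar + q c * Al \<ge> mn * (d - c) * Q" .
  have "Q * Q \<le> (2 * mn * (d - c)) * Q" using Qmn Q1(3) by (rule mult_right_mono)
  then have "Q^2 / 2 \<le> mn * (d - c) * Q" by (simp add: power2_eq_square algebra_simps)
  with A show ?thesis unfolding Q_def Ar_def Al_def by simp
qed



lemma Lip_bound:
  fixes F :: "real \<Rightarrow> real"
  assumes "x \<in> {a..b}" "y \<in> {a..b}" "x \<noteq> y"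
  shows "ereal (\<bar>F x - F y\<bar> / \<bar>x - y\<bar>) \<le> Lip a b F"
  unfolding Lip_def
  by (rule SUP_upper2[where i="(x,y)"]) (use assms in auto)

lemma Lip_real:
  fixes F :: "real \<Rightarrow> real"
  assumes ab: "a < b" and L: "Lip a b F < ereal K"
  obtains LF where "LF < K" "\<And>x y. x \<in> {a..b} \<Longrightarrow> y \<in> {a..b} \<Longrightarrow> \<bar>F x - F y\<bar> \<le> LF * \<bar>x - y\<bar>"
proof -
  have "ereal (\<bar>F a - F b\<bar> / \<bar>a - b\<bar>) \<le> Lip a b F" using ab by (intro Lip_bound) auto
  then have nn: "ereal 0 \<le> Lip a b F" by (rule order_trans[rotated]) simp
  define LF where "LF = real_of_ereal (Lip a b F)"
  have e: "Lip a b F = ereal LF" unfolding LF_def using nn L by (cases "Lip a b F") auto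
  show ?thesis
  proof
    show "LF < K" using L e by simp
    fix x y assume xy: "x \<in> {a..b}" "y \<in> {a..b}"
    show "\<bar>F x - F y\<bar> \<le> LF * \<bar>x - y\<bar>"
    proof (cases "x = y")
      case False
      then have "\<bar>F x - F y\<bar> / \<bar>x - y\<bar> \<le> LF" using Lip_bound[OF xy False, of F] e by simp
      then show ?thesis using False by (simp add: divide_le_eq)
    qed simp
  qed
qed

lemma Lip_p_bound:
  fixes p :: "real \<Rightarrow> real" and m :: real
  assumes m: "m > 0"
    and INF: "(INF x \<in> S. ereal (p x)) \<ge> ereal (1 / m) * Lip a b p"
    and z: "z \<in> S" "z \<in> {a..b}" and t: "t \<in> {a..b}" and tz: "\<bar>t - z\<bar> \<le> 1 / m" and pz: "p z \<ge> 0"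
  shows "\<bar>p t - p z\<bar> \<le> p z"
proof (cases "t = z")
  case True
  then show ?thesis using pz by simp
next
  case False
  define r where "r = \<bar>p t - p z\<bar> / \<bar>t - z\<bar>"
  have "ereal (1/m) * ereal r \<le> ereal (1/m) * Lip a b p"
    unfolding r_def using m by (intro ereal_mult_left_mono Lip_bound t z(2) False) auto
  also have "\<dots> \<le> ereal (p z)"
    using INF INF_lower[OF z(1), of "\<lambda>x. ereal (p x)"] by (rule order_trans)
  finally have "(1/m) * r \<le> p z" by simp
  moreover have "\<bar>p t - p z\<bar> \<le> (1/m) * r"
  proof -
    have pos: "\<bar>t - z\<bar> > 0" using False by simp
    have "\<bar>p t - p z\<bar> = r * \<bar>t - z\<bar>" unfolding r_def using pos by simp
    also have "\<dots> \<le> r * (1/m)" using tz by (intro mult_left_mono) (auto simp: r_def)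
    finally show ?thesis by simp
  qed
  ultimately show ?thesis by simp
qed



locale nnset =
  fixes a b :: real and h :: nat and v w \<theta> :: "nat \<Rightarrow> real" and f p :: "real \<Rightarrow> real" and Lf :: real
  assumes ab: "a < b"
    and vw: "\<And>i. i \<in> {1..h} \<Longrightarrow> v i > 0 \<and> w i > 0"
    and fc: "continuous_on UNIV f" and pc: "continuous_on UNIV p"
    and pnn: "\<And>x. p x \<ge> 0" and psupp: "{x. p x > 0} = {a<..<b}"
    and Lf: "\<And>x y. x \<in> {a..b} \<Longrightarrow> y \<in> {a..b} \<Longrightarrow> \<bar>f x - f y\<bar> \<le> Lf * \<bar>x - y\<bar>"
    and Lfk: "\<And>j. j \<in> {1..h} \<Longrightarrow> Lf < v j * w j"
    and F1: "\<And>k. k \<in> {1..h} \<Longrightarrow> integral {-(\<theta> k / w k)..(1 - \<theta> k)/w k} (\<lambda>x. (NN h v w \<theta> x - f x) * p x) = 0"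
    and F2: "\<And>k. k \<in> {1..h} \<Longrightarrow> (NN h v w \<theta> ((1 - \<theta> k)/w k) - f ((1 - \<theta> k)/w k)) * p ((1 - \<theta> k)/w k)
          - (NN h v w \<theta> (-(\<theta> k / w k)) - f (-(\<theta> k / w k))) * p (-(\<theta> k / w k))
          \<le> v k * w k * integral {-(\<theta> k / w k)..(1 - \<theta> k)/w k} p"
begin

definition "D x = NN h v w \<theta> x - f x"
definition "lo k = -(\<theta> k / w k)"
definition "hi k = (1 - \<theta> k) / w k"
definition "lc k = max (lo k) a"
definition "hc k = min (hi k) b"

lemma pZ: "x \<notin> {a<..<b} \<Longrightarrow> p x = 0"
  using pnn[of x] psupp by (metis less_eq_real_def mem_Collect_eq)

lemma ppos: "x \<in> {a<..<b} \<Longrightarrow> p x > 0"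
  using psupp by blast

lemma NNc: "continuous_on UNIV (NN h v w \<theta>)"
proof -
  have e: "NN h v w \<theta> = (\<lambda>x. \<theta> (h+1) + (\<Sum>i=1..h. v i * clip (w i * x + \<theta> i)))"
    by (rule ext) (simp add: NN_def)
  show ?thesis unfolding e by (intro continuous_intros)
qed

lemma Dc: "continuous_on UNIV D"
  unfolding D_def by (intro continuous_intros fc NNc)

lemma Dpc: "continuous_on S (\<lambda>x. D x * p x)"
  by (intro continuous_intros continuous_on_subset[OF Dc subset_UNIV] continuous_on_subset[OF pc subset_UNIV])

lemma lohi: "k \<in> {1..h} \<Longrightarrow> hi k = lo k + 1 / w k"
  unfolding lo_def hi_def using vw[of k] by (simp add: field_simps)

lemma clip_on: "k \<in> {1..h} \<Longrightarrow> lo k \<le> x \<Longrightarrow> x \<le> hi k \<Longrightarrow> clip (w k * x + \<theta> k) = w k * x + \<theta> k"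
proof -
  assume k: "k \<in> {1..h}" and x: "lo k \<le> x" "x \<le> hi k"
  have w: "w k > 0" using vw[OF k] by simp
  have "w k * lo k \<le> w k * x" "w k * x \<le> w k * hi k" using x w by (auto intro: mult_left_mono)
  moreover have "w k * lo k = - \<theta> k" "w k * hi k = 1 - \<theta> k" using w by (auto simp: lo_def hi_def)
  ultimately show ?thesis by (intro clipid) auto
qed

lemma NN_slope:
  assumes T: "T \<subseteq> {1..h}" and xy: "x \<le> y" and inT: "\<And>j. j \<in> T \<Longrightarrow> lo j \<le> x \<and> y \<le> hi j"
  shows "NN h v w \<theta> y - NN h v w \<theta> x \<ge> (\<Sum>j\<in>T. v j * w j) * (y - x)"
proof -
  have "NN h v w \<theta> y - NN h v w \<theta> x = (\<Sum>j=1..h. v j * (clip (w j * y + \<theta> j) - clip (w j * x + \<theta> j)))"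
    unfolding NN_def by (simp add: sum_subtractf algebra_simps)
  also have "\<dots> \<ge> (\<Sum>j\<in>T. v j * (clip (w j * y + \<theta> j) - clip (w j * x + \<theta> j)))"
  proof (rule sum_mono2)
    fix j assume j: "j \<in> {1..h} - T"
    then have "v j > 0" "w j > 0" using vw by auto
    then have "w j * x + \<theta> j \<le> w j * y + \<theta> j" using xy by (simp add: mult_left_mono)
    then have "clip (w j * x + \<theta> j) \<le> clip (w j * y + \<theta> j)" by (rule clip_mono)
    then show "0 \<le> v j * (clip (w j * y + \<theta> j) - clip (w j * x + \<theta> j))" using \<open>v j > 0\<close> by simp
  qed (use T in auto)
  also have "(\<Sum>j\<in>T. v j * (clip (w j * y + \<theta> j) - clip (w j * x + \<theta> j))) = (\<Sum>j\<in>T. v j * w j * (y - x))"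
  proof (rule sum.cong)
    fix j assume j: "j \<in> T"
    then have jh: "j \<in> {1..h}" using T by auto
    have "lo j \<le> x" "x \<le> hi j" "lo j \<le> y" "y \<le> hi j" using inT[OF j] xy by auto
    then have "clip (w j * y + \<theta> j) = w j * y + \<theta> j" "clip (w j * x + \<theta> j) = w j * x + \<theta> j"
      using clip_on[OF jh] by auto
    then show "v j * (clip (w j * y + \<theta> j) - clip (w j * x + \<theta> j)) = v j * w j * (y - x)"
      by (simp add: algebra_simps)
  qed simp
  finally show ?thesis by (simp add: sum_distrib_right)
qed

lemma D_slope:
  assumes T: "T \<subseteq> {1..h}" and xy: "x \<le> y" and inT: "\<And>j. j \<in> T \<Longrightarrow> lo j \<le> x \<and> y \<le> hi j"
    and ab': "x \<in> {a..b}" "y \<in> {a..b}"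
  shows "D y - D x \<ge> ((\<Sum>j\<in>T. v j * w j) - Lf) * (y - x)"
proof -
  have "f y - f x \<le> Lf * (y - x)" using Lf[OF ab'(2,1)] xy by auto
  then show ?thesis using NN_slope[OF T xy inT] unfolding D_def by (simp add: algebra_simps)
qed

lemma clipint:
  fixes G :: "real \<Rightarrow> real" and l r :: real
  assumes G: "continuous_on UNIV G" and Z: "\<And>x. x \<notin> {a<..<b} \<Longrightarrow> G x = 0"
    and lr: "max l a \<le> min r b"
  shows "integral {l..r} G = integral {max l a..min r b} G"
proof -
  have i1: "integral {l..r} G = integral {l..max l a} G + integral {max l a..r} G"
    using lr by (intro Henstock_Kurzweil_Integration.integral_combine[symmetric] cint G) auto
  have i2: "integral {max l a..r} G = integral {max l a..min r b} G + integral {min r b..r} G"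
    using lr by (intro Henstock_Kurzweil_Integration.integral_combine[symmetric] cint G) auto
  have z1: "integral {l..max l a} G = 0"
  proof (cases "l \<le> a")
    case True
    then have "integral {l..max l a} G = integral {l..max l a} (\<lambda>x. 0)"
      by (intro integral_cong Z) auto
    then show ?thesis by simp
  next
    case False
    then show ?thesis by simp
  qed
  have z2: "integral {min r b..r} G = 0"
  proof (cases "b \<le> r")
    case True
    then have "integral {min r b..r} G = integral {min r b..r} (\<lambda>x. 0)"
      by (intro integral_cong Z) auto
    then show ?thesis by simp
  next
    case False
    then show ?thesis by simp
  qed
  show ?thesis using i1 i2 z1 z2 by simp
qed

context
  fixes k x0
  assumes k: "k \<in> {1..h}" and x0: "lo k < x0" "x0 < hi k" "a < x0" "x0 < b"
begin

lemma cl_basic: "lc k < hc k" "lo k \<le> lc k" "hc k \<le> hi k" "a \<le> lc k" "hc k \<le> b" "lc k < x0" "x0 < hc k"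
  using x0 unfolding lc_def hc_def by auto

lemma F1c: "integral {lc k..hc k} (\<lambda>x. D x * p x) = 0"
proof -
  have "integral {lo k..hi k} (\<lambda>x. D x * p x) = 0" using F1[OF k] unfolding D_def lo_def hi_def by simp
  moreover have "integral {lo k..hi k} (\<lambda>x. D x * p x) = integral {lc k..hc k} (\<lambda>x. D x * p x)"
    unfolding lc_def hc_def by (rule clipint[OF Dpc]) (use pZ cl_basic in \<open>auto simp: lc_def hc_def\<close>)
  ultimately show ?thesis by simp
qed

lemma F2c: "D (hc k) * p (hc k) - D (lc k) * p (lc k) \<le> v k * w k * integral {lc k..hc k} p"
proof -
  have pc': "continuous_on UNIV p" by (rule pc)
  have "D (hi k) * p (hi k) - D (lo k) * p (lo k) \<le> v k * w k * integral {lo k..hi k} p"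
    using F2[OF k] unfolding D_def lo_def hi_def by simp
  moreover have "integral {lo k..hi k} p = integral {lc k..hc k} p"
    unfolding lc_def hc_def by (rule clipint[OF pc']) (use pZ cl_basic in \<open>auto simp: lc_def hc_def\<close>)
  moreover have "D (hi k) * p (hi k) = D (hc k) * p (hc k)"
  proof (cases "hi k \<le> b")
    case True then show ?thesis by (simp add: hc_def)
  next
    case False
    then have "p (hi k) = 0" "p (hc k) = 0" using pZ[of "hi k"] pZ[of b] by (auto simp: hc_def)
    then show ?thesis by simp
  qed
  moreover have "D (lo k) * p (lo k) = D (lc k) * p (lc k)"
  proof (cases "a \<le> lo k")
    case True then show ?thesis by (simp add: lc_def)
  next
    case False
    then have "p (lo k) = 0" "p (lc k) = 0" using pZ[of "lo k"] pZ[of a] by (auto simp: lc_def)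
    then show ?thesis by simp
  qed
  ultimately show ?thesis by simp
qed

end

lemma posint:
  assumes "a \<le> c" "c < d" "d \<le> b" "\<And>t. t \<in> {c..d} \<Longrightarrow> D t \<ge> 0" "D ((c+d)/2) > 0"
  shows "integral {c..d} (\<lambda>t. D t * p t) > 0"
proof (rule int_pos[OF assms(2) Dpc])
  show "\<And>t. t \<in> {c..d} \<Longrightarrow> 0 \<le> D t * p t" using assms(4) pnn by simp
  show "(c+d)/2 \<in> {c..d}" using assms by auto
  have "p ((c+d)/2) > 0" using assms by (intro ppos) auto
  then show "D ((c+d)/2) * p ((c+d)/2) > 0" using assms(5) by simp
qed

lemma negint:
  assumes "a \<le> c" "c < d" "d \<le> b" "\<And>t. t \<in> {c..d} \<Longrightarrow> D t \<le> 0" "D ((c+d)/2) < 0"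
  shows "integral {c..d} (\<lambda>t. D t * p t) < 0"
proof -
  have "integral {c..d} (\<lambda>t. - (D t * p t)) > 0"
  proof (rule int_pos[OF assms(2)])
    show "continuous_on {c..d} (\<lambda>t. - (D t * p t))" by (intro continuous_intros Dpc)
    show "\<And>t. t \<in> {c..d} \<Longrightarrow> 0 \<le> - (D t * p t)" using assms(4) pnn by (simp add: mult_nonpos_nonneg)
    show "(c+d)/2 \<in> {c..d}" using assms by auto
    have "p ((c+d)/2) > 0" using assms by (intro ppos) auto
    then show "- (D ((c+d)/2) * p ((c+d)/2)) > 0" using assms(5) by (simp add: mult_neg_pos)
  qed
  then show ?thesis by (simp add: integral_neg)
qed

lemma nocross:
  assumes i: "i \<in> {1..h}" and j: "j \<in> {1..h}"
    and xi: "lo i < x0" "x0 < hi i" and xj: "lo j < x0" "x0 < hi j" and x0: "a < x0" "x0 < b"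
  shows "\<not> (lc i < lc j \<and> hc i < hc j)"
proof
  assume cr: "lc i < lc j \<and> hc i < hc j"
  note bi = cl_basic[OF i xi x0] and bj = cl_basic[OF j xj x0]
  define l1 where "l1 = lc i"
  define l2 where "l2 = lc j"
  define r1 where "r1 = hc i"
  define r2 where "r2 = hc j"
  have ord: "l1 < l2" "l2 < r1" "r1 < r2" "a \<le> l1" "r2 \<le> b"
    using cr bi bj unfolding l1_def l2_def r1_def r2_def by auto
  define ci where "ci = v i * w i - Lf"
  define cj where "cj = v j * w j - Lf"
  have cpos: "ci > 0" "cj > 0" using Lfk[OF i] Lfk[OF j] unfolding ci_def cj_def by auto
  have si: "D y - D x \<ge> ci * (y - x)" if "l1 \<le> x" "x \<le> y" "y \<le> r1" for x y
    using D_slope[of "{i}" x y] i that bi ord unfolding ci_def l1_def r1_def by auto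
  have sj: "D y - D x \<ge> cj * (y - x)" if "l2 \<le> x" "x \<le> y" "y \<le> r2" for x y
    using D_slope[of "{j}" x y] j that bj ord unfolding cj_def l2_def r2_def by auto
  have Fi: "integral {l1..r1} (\<lambda>t. D t * p t) = 0" using F1c[OF i xi x0] unfolding l1_def r1_def .
  have Fj: "integral {l2..r2} (\<lambda>t. D t * p t) = 0" using F1c[OF j xj x0] unfolding l2_def r2_def .
  have spi: "integral {l1..r1} (\<lambda>t. D t * p t) = integral {l1..l2} (\<lambda>t. D t * p t) + integral {l2..r1} (\<lambda>t. D t * p t)"
    using ord by (intro Henstock_Kurzweil_Integration.integral_combine[symmetric] integrable_continuous_interval Dpc) auto
  have spj: "integral {l2..r2} (\<lambda>t. D t * p t) = integral {l2..r1} (\<lambda>t. D t * p t) + integral {r1..r2} (\<lambda>t. D t * p t)"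
    using ord by (intro Henstock_Kurzweil_Integration.integral_combine[symmetric] integrable_continuous_interval Dpc) auto
  show False
  proof (cases "D l2 \<ge> 0")
    case True
    have "integral {l2..r2} (\<lambda>t. D t * p t) > 0"
    proof (rule posint)
      show "a \<le> l2" "l2 < r2" "r2 \<le> b" using ord by auto
      fix t assume "t \<in> {l2..r2}"
      then have "D t - D l2 \<ge> cj * (t - l2)" by (intro sj) auto
      moreover have "cj * (t - l2) \<ge> 0" using cpos \<open>t \<in> {l2..r2}\<close> by simp
      ultimately show "D t \<ge> 0" using True by simp
    next
      have "D ((l2+r2)/2) - D l2 \<ge> cj * ((l2+r2)/2 - l2)" using ord by (intro sj) auto
      moreover have "cj * ((l2+r2)/2 - l2) > 0" using cpos ord by simp
      ultimately show "D ((l2+r2)/2) > 0" using True by simp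
    qed
    then show False using Fj by simp
  next
    case False
    have A: "integral {l1..l2} (\<lambda>t. D t * p t) < 0"
    proof (rule negint)
      show "a \<le> l1" "l1 < l2" "l2 \<le> b" using ord by auto
      fix t assume t: "t \<in> {l1..l2}"
      then have "D l2 - D t \<ge> ci * (l2 - t)" using ord by (intro si) auto
      moreover have "ci * (l2 - t) \<ge> 0" using cpos t by simp
      ultimately show "D t \<le> 0" using False by simp
    next
      have "D l2 - D ((l1+l2)/2) \<ge> ci * (l2 - (l1+l2)/2)" using ord by (intro si) auto
      moreover have "ci * (l2 - (l1+l2)/2) \<ge> 0" using cpos ord by simp
      ultimately show "D ((l1+l2)/2) < 0" using False by simp
    qed
    show False
    proof (cases "D r1 \<le> 0")
      case True
      have "integral {l1..r1} (\<lambda>t. D t * p t) < 0"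
      proof (rule negint)
        show "a \<le> l1" "l1 < r1" "r1 \<le> b" using ord by auto
        fix t assume t: "t \<in> {l1..r1}"
        then have "D r1 - D t \<ge> ci * (r1 - t)" by (intro si) auto
        moreover have "ci * (r1 - t) \<ge> 0" using cpos t by simp
        ultimately show "D t \<le> 0" using True by simp
      next
        have "D r1 - D ((l1+r1)/2) \<ge> ci * (r1 - (l1+r1)/2)" using ord by (intro si) auto
        moreover have "ci * (r1 - (l1+r1)/2) > 0" using cpos ord by simp
        ultimately show "D ((l1+r1)/2) < 0" using True by simp
      qed
      then show False using Fi by simp
    next
      case False
      have C: "integral {r1..r2} (\<lambda>t. D t * p t) > 0"
      proof (rule posint)
        show "a \<le> r1" "r1 < r2" "r2 \<le> b" using ord by auto
        fix t assume t: "t \<in> {r1..r2}"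
        then have "D t - D r1 \<ge> cj * (t - r1)" using ord by (intro sj) auto
        moreover have "cj * (t - r1) \<ge> 0" using cpos t by simp
        ultimately show "D t \<ge> 0" using False by simp
      next
        have "D ((r1+r2)/2) - D r1 \<ge> cj * ((r1+r2)/2 - r1)" using ord by (intro sj) auto
        moreover have "cj * ((r1+r2)/2 - r1) \<ge> 0" using cpos ord by simp
        ultimately show "D ((r1+r2)/2) > 0" using False by simp
      qed
      show False using A C Fi Fj spi spj by simp
    qed
  qed
qed


lemma bound_at:
  fixes m \<delta> \<epsilon> x0 :: real
  assumes x0: "a < x0" "x0 < b"
    and m: "m > 0" "\<And>j. j \<in> {1..h} \<Longrightarrow> m \<le> w j"
    and de: "\<delta> > 0" "\<epsilon> - \<delta> > 1 / m"
    and pI: "\<And>z t. z \<in> {a+\<delta>..b-\<delta>} \<Longrightarrow> t \<in> {a..b} \<Longrightarrow> \<bar>t - z\<bar> \<le> 1/m \<Longrightarrow> \<bar>p t - p z\<bar> \<le> p z"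
    and inc: "strict_mono_on {a..a+\<epsilon>} p"
    and dec: "\<forall>x \<in> {b-\<epsilon>..b}. \<forall>y \<in> {b-\<epsilon>..b}. x < y \<longrightarrow> p y < p x"
  shows "(\<Sum>j \<in> {j \<in> {1..h}. x0 \<in> Iset a b w \<theta> j}. v j * w j)
             \<le> 4 * Max (insert 0 ((\<lambda>j. v j * w j) ` {j \<in> {1..h}. x0 \<in> Iset a b w \<theta> j}))"
proof (rule ccontr)
  define J where "J = {j \<in> {1..h}. x0 \<in> Iset a b w \<theta> j}"
  define S where "S = (\<Sum>j\<in>J. v j * w j)"
  define M where "M = Max (insert 0 ((\<lambda>j. v j * w j) ` J))"
  assume "\<not> ?thesis"
  then have SM: "S > 4 * M" unfolding S_def M_def J_def by simp
  have Jsub: "J \<subseteq> {1..h}" unfolding J_def by auto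
  have finJ: "finite J" using Jsub finite_subset by blast
  have Jmem: "lo j < x0 \<and> x0 < hi j" if "j \<in> J" for j
  proof -
    have jh: "j \<in> {1..h}" using that Jsub by auto
    have "x0 \<in> Iset a b w \<theta> j" using that unfolding J_def by auto
    then show ?thesis unfolding Iset_def psi_def using lohi[OF jh] by (auto simp: lo_def)
  qed
  have Jne: "J \<noteq> {}"
  proof
    assume "J = {}"
    then show False using SM unfolding S_def M_def by simp
  qed
  have Mk: "v j * w j \<le> M" if "j \<in> J" for j
    unfolding M_def using finJ that by (intro Max_ge) auto
  define len where "len = (\<lambda>j. hc j - lc j)"
  obtain k where kJ: "k \<in> J" and kmin: "\<And>j. j \<in> J \<Longrightarrow> len k \<le> len j"
  proof -
    have "Min (len ` J) \<in> len ` J" using finJ Jne by (intro Min_in) auto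
    then obtain k where "k \<in> J" "len k = Min (len ` J)" by auto
    moreover have "\<And>j. j \<in> J \<Longrightarrow> Min (len ` J) \<le> len j" using finJ by (intro Min_le) auto
    ultimately show ?thesis using that by metis
  qed
  have kh: "k \<in> {1..h}" using kJ Jsub by auto
  note xk = Jmem[OF kJ]
  note bk = cl_basic[OF kh _ _ x0, OF conjunct1[OF xk] conjunct2[OF xk]]
  have nest: "lc j \<le> lc k \<and> hc k \<le> hc j" if jJ: "j \<in> J" for j
  proof -
    have jh: "j \<in> {1..h}" using jJ Jsub by auto
    note xj = Jmem[OF jJ]
    note bj = cl_basic[OF jh _ _ x0, OF conjunct1[OF xj] conjunct2[OF xj]]
    have n1: "\<not> (lc k < lc j \<and> hc k < hc j)" by (rule nocross[OF kh jh _ _ _ _ x0]) (use xk xj in auto)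
    have n2: "\<not> (lc j < lc k \<and> hc j < hc k)" by (rule nocross[OF jh kh _ _ _ _ x0]) (use xk xj in auto)
    have "len k \<le> len j" by (rule kmin[OF jJ])
    then show ?thesis using n1 n2 unfolding len_def by auto
  qed
  define c where "c = lc k"
  define d where "d = hc k"
  have cd: "c < d" "a \<le> c" "d \<le> b" using bk unfolding c_def d_def by auto
  have wk: "w k > 0" "v k > 0" using vw[OF kh] by auto
  have dc: "d - c \<le> 1/m"
  proof -
    have "d - c \<le> hi k - lo k" using bk unfolding c_def d_def by auto
    also have "\<dots> = 1 / w k" using lohi[OF kh] by simp
    also have "\<dots> \<le> 1 / m" using m(1) m(2)[OF kh] by (intro divide_left_mono) auto
    finally show ?thesis .
  qed
  have Sk: "v k * w k \<le> S"
    unfolding S_def using finJ kJ vw Jsub by (intro member_le_sum) (auto intro!: mult_nonneg_nonneg less_imp_le)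
  have Lk: "Lf < v k * w k" by (rule Lfk[OF kh])
  have "S - Lf \<le> 2 * (v k * w k)"
  proof (rule main_ineq[of c d D p])
    show "c < d" by (rule cd)
    show "continuous_on {c..d} D" by (rule continuous_on_subset[OF Dc subset_UNIV])
    show "continuous_on {c..d} p" by (rule continuous_on_subset[OF pc subset_UNIV])
    show "\<And>t. t \<in> {c..d} \<Longrightarrow> 0 \<le> p t" using pnn by simp
    show "integral {c..d} (\<lambda>t. D t * p t) = 0" unfolding c_def d_def by (rule F1c[OF kh _ _ x0]) (use xk in auto)
    show "D d * p d - D c * p c \<le> v k * w k * integral {c..d} p" unfolding c_def d_def by (rule F2c[OF kh _ _ x0]) (use xk in auto)
    show "D y - D x \<ge> (S - Lf) * (y - x)" if "c \<le> x" "x \<le> y" "y \<le> d" for x y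
      unfolding S_def
    proof (rule D_slope[OF Jsub \<open>x \<le> y\<close>])
      fix j assume jJ: "j \<in> J"
      have jh: "j \<in> {1..h}" using jJ Jsub by auto
      note xj = Jmem[OF jJ]
      note bj = cl_basic[OF jh _ _ x0, OF conjunct1[OF xj] conjunct2[OF xj]]
      show "lo j \<le> x \<and> y \<le> hi j" using nest[OF jJ] bj that unfolding c_def d_def by auto
    qed (use that cd in auto)
    show "S - Lf \<ge> 0" using Sk Lk by simp
    show "integral {c..d} p > 0"
    proof (rule int_pos[OF cd(1)])
      show "continuous_on {c..d} p" by (rule continuous_on_subset[OF pc subset_UNIV])
      show "\<And>t. t \<in> {c..d} \<Longrightarrow> 0 \<le> p t" using pnn by simp
      show "(c+d)/2 \<in> {c..d}" using cd by auto
      show "p ((c+d)/2) > 0" using cd by (intro ppos) auto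
    qed
    have pc': "continuous_on {c..d} p" by (rule continuous_on_subset[OF pc subset_UNIV])
    have pn': "\<And>t. t \<in> {c..d} \<Longrightarrow> 0 \<le> p t" using pnn by simp
    show "p d * integral {c..d} (\<lambda>t. (d - t) * p t) + p c * integral {c..d} (\<lambda>t. (t - c) * p t) \<ge> (integral {c..d} p)^2 / 2"
    proof (cases "c < a + \<delta>")
      case True
      have "d < a + \<epsilon>" using True dc de by simp
      show ?thesis
      proof (rule condV_B[OF less_imp_le[OF cd(1)] pc' pn'])
        fix t assume t: "t \<in> {c..d}"
        show "p t \<le> p d"
        proof (cases "t < d")
          case True
          then show ?thesis using strict_mono_onD[OF inc, of t d] t cd \<open>d < a + \<epsilon>\<close> by auto
        qed (use t in auto)
      qed
    next
      case nB: False
      show ?thesis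
      proof (cases "d > b - \<delta>")
        case True
        have "c > b - \<epsilon>" using True dc de by simp
        show ?thesis
        proof (rule condV_C[OF less_imp_le[OF cd(1)] pc' pn'])
          fix t assume t: "t \<in> {c..d}"
          show "p t \<le> p c"
          proof (cases "c < t")
            case True
            have "c \<in> {b-\<epsilon>..b}" "t \<in> {b-\<epsilon>..b}" using \<open>c > b - \<epsilon>\<close> t cd by auto
            then show ?thesis using dec True by force
          qed (use t in auto)
        qed
      next
        case False
        have cI: "c \<in> {a+\<delta>..b-\<delta>}" "d \<in> {a+\<delta>..b-\<delta>}" using nB False cd by auto
        show ?thesis
        proof (rule condV_A[OF less_imp_le[OF cd(1)] pc' pn'])
          fix t assume t: "t \<in> {c..d}"
          have "\<bar>p t - p c\<bar> \<le> p c" using t cd dc by (intro pI cI) auto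
          then show "p t \<le> 2 * p c" by simp
          have "\<bar>p t - p d\<bar> \<le> p d" using t cd dc by (intro pI cI) auto
          then show "p t \<le> 2 * p d" by simp
        qed
      qed
    qed
  qed
  moreover have "S > 4 * (v k * w k)" using SM Mk[OF kJ] by simp
  moreover have "v k * w k > 0" using wk by simp
  ultimately show False using Lk by linarith
qed

end



lemma FD_facts:
  fixes f p :: "real \<Rightarrow> real" and v w \<theta> :: "nat \<Rightarrow> real"
  assumes k: "k \<in> {1..h}" and vk: "v k > 0" and wk: "w k > 0" and f: "continuous_on UNIV f" and p: "continuous_on UNIV p"
    and Z: "\<And>x. x \<notin> {a<..<b} \<Longrightarrow> p x = 0" and ab: "a \<le> b"
    and P0: "partial (risk a b h v w f p) k \<theta> = 0" and H0: "hess (risk a b h v w f p) \<theta> k k \<ge> 0"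
  shows "integral {-(\<theta> k / w k)..(1 - \<theta> k)/w k} (\<lambda>x. (NN h v w \<theta> x - f x) * p x) = 0"
    "(NN h v w \<theta> ((1 - \<theta> k)/w k) - f ((1 - \<theta> k)/w k)) * p ((1 - \<theta> k)/w k)
          - (NN h v w \<theta> (-(\<theta> k / w k)) - f (-(\<theta> k / w k))) * p (-(\<theta> k / w k))
          \<le> v k * w k * integral {-(\<theta> k / w k)..(1 - \<theta> k)/w k} p"
proof -
  define R where "R = (\<lambda>x. \<theta> (h+1) + (\<Sum>j\<in>{1..h}-{k}. v j * clip (w j * x + \<theta> j)) - f x)"
  define lo where "lo = -(\<theta> k / w k)"
  define hi where "hi = (1 - \<theta> k) / w k"
  have Rc: "continuous_on UNIV R" unfolding R_def by (intro continuous_intros f)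
  have DR: "NN h v w \<theta> x - f x = R x + v k * clip (w k * x + \<theta> k)" for x
    using NN_upd[OF k, of v w \<theta> "\<theta> k" x] unfolding R_def by simp
  have wlo: "w k * lo + \<theta> k = 0" and whi: "w k * hi + \<theta> k = 1" using wk by (auto simp: lo_def hi_def)
  note FD = risk_FD[where v=v and \<theta>=\<theta> and i=k and w=w and a=a and b=b, OF k wk f p Z ab]
  have part: "partial (risk a b h v w f p) k \<theta> = 2 * v k * integral {lo..hi} (\<lambda>x. R x * p x) + (v k)^2 * (2 * integral {lo..hi} (\<lambda>x. (w k * x + \<theta> k) * p x))"
    using FD(1) unfolding R_def lo_def hi_def by simp
  have hs: "hess (risk a b h v w f p) \<theta> k k = 2 * v k * ((R lo * p lo - R hi * p hi) / w k) + (v k)^2 * (2 * (integral {lo..hi} p - p hi / w k))"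
    using FD(2) unfolding R_def lo_def hi_def by simp
  have "integral {lo..hi} (\<lambda>x. (NN h v w \<theta> x - f x) * p x) = integral {lo..hi} (\<lambda>x. R x * p x + v k * ((w k * x + \<theta> k) * p x))"
  proof (rule integral_cong)
    fix x assume x: "x \<in> {lo..hi}"
    have "w k * lo \<le> w k * x" "w k * x \<le> w k * hi" using x wk by (auto intro: mult_left_mono)
    then have "clip (w k * x + \<theta> k) = w k * x + \<theta> k" using wlo whi by (intro clipid) auto
    then show "(NN h v w \<theta> x - f x) * p x = R x * p x + v k * ((w k * x + \<theta> k) * p x)"
      by (simp add: DR algebra_simps)
  qed
  also have "\<dots> = integral {lo..hi} (\<lambda>x. R x * p x) + v k * integral {lo..hi} (\<lambda>x. (w k * x + \<theta> k) * p x)"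
    by (subst integral_add) (auto intro!: cint continuous_intros Rc p)
  finally have I: "integral {lo..hi} (\<lambda>x. (NN h v w \<theta> x - f x) * p x) = integral {lo..hi} (\<lambda>x. R x * p x) + v k * integral {lo..hi} (\<lambda>x. (w k * x + \<theta> k) * p x)" .
  have "2 * v k * integral {lo..hi} (\<lambda>x. (NN h v w \<theta> x - f x) * p x) = partial (risk a b h v w f p) k \<theta>"
    unfolding I part by (simp add: algebra_simps power2_eq_square)
  then show "integral {-(\<theta> k / w k)..(1 - \<theta> k)/w k} (\<lambda>x. (NN h v w \<theta> x - f x) * p x) = 0"
    using P0 vk unfolding lo_def hi_def by simp
  have Dlo: "NN h v w \<theta> lo - f lo = R lo" using DR[of lo] wlo by (simp add: clip0)
  have Dhi: "NN h v w \<theta> hi - f hi = R hi + v k" using DR[of hi] whi by (simp add: clip1)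
  have "0 \<le> (w k / (2 * v k)) * hess (risk a b h v w f p) \<theta> k k"
    using H0 wk vk by simp
  also have "(w k / (2 * v k)) * hess (risk a b h v w f p) \<theta> k k = (R lo * p lo - R hi * p hi) + v k * w k * integral {lo..hi} p - v k * p hi"
    unfolding hs using wk vk by (simp add: field_simps power2_eq_square)
  finally show "(NN h v w \<theta> ((1 - \<theta> k)/w k) - f ((1 - \<theta> k)/w k)) * p ((1 - \<theta> k)/w k)
          - (NN h v w \<theta> (-(\<theta> k / w k)) - f (-(\<theta> k / w k))) * p (-(\<theta> k / w k))
          \<le> v k * w k * integral {-(\<theta> k / w k)..(1 - \<theta> k)/w k} p"
    using Dlo Dhi unfolding lo_def[symmetric] hi_def[symmetric] by (simp add: algebra_simps)
qed


lemma delta_sum: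
  fixes H :: "nat \<Rightarrow> nat \<Rightarrow> real"
  assumes "k \<in> A" "finite A"
  shows "(\<Sum>i\<in>A. \<Sum>j\<in>A. (if i = k then 1 else 0) * H i j * (if j = k then 1 else 0)) = H k k"
proof -
  have "(\<Sum>i\<in>A. \<Sum>j\<in>A. (if i = k then 1 else 0) * H i j * (if j = k then 1 else 0)) = (\<Sum>i\<in>A. if i = k then H i k else 0)"
    by (rule sum.cong) (use assms in \<open>auto simp: if_distrib sum.delta cong: if_cong\<close>)
  also have "\<dots> = H k k" using assms by (simp add: sum.delta)
  finally show ?thesis .
qed

theorem corollary2p11:
  fixes a b \<epsilon> \<delta> :: real and h :: nat and v w \<theta> :: "nat \<Rightarrow> real" and f p :: "real \<Rightarrow> real"
  assumes "a < b" and "h \<ge> 1"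
    and "\<forall>i \<in> {1..h}. v i > 0 \<and> w i > 0"
    and "continuous_on UNIV f" and "continuous_on UNIV p"
    and "\<forall>x. p x \<ge> 0" and "{x. p x > 0} = {a<..<b}"
    and "Lip a b f < ereal (Min ((\<lambda>i. v i * w i) ` {1..h}))"
    and "\<forall>i \<in> {1..h+1}. partial (risk a b h v w f p) i \<theta> = 0"
    and "\<epsilon> > 0" and "\<delta> > 0"
    and "\<epsilon> - \<delta> > 2 / Min (w ` {1..h})"
    and "(INF x \<in> {a+\<delta>..b-\<delta>}. ereal (p x)) \<ge> ereal (1 / Min (w ` {1..h})) * Lip a b p"
    and "strict_mono_on {a..a+\<epsilon>} p"
    and "\<forall>x \<in> {b-\<epsilon>..b}. \<forall>y \<in> {b-\<epsilon>..b}. x < y \<longrightarrow> p y < p x"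
    and "\<not> descending_critical_point (h+1) (risk a b h v w f p) \<theta>"
  shows "\<forall>x \<in> {a<..<b}.
           (\<Sum>j \<in> {j \<in> {1..h}. x \<in> Iset a b w \<theta> j}. v j * w j)
             \<le> 4 * Max (insert 0 ((\<lambda>j. v j * w j) ` {j \<in> {1..h}. x \<in> Iset a b w \<theta> j}))"
proof -
  note ab = assms(1) and vw = assms(3) and fc = assms(4) and pc = assms(5) and pnn = assms(6) and psupp = assms(7)
  have hne: "{1..h} \<noteq> {}" "finite {1..h}" using assms(2) by auto
  define K where "K = Min ((\<lambda>i. v i * w i) ` {1..h})"
  have Kle: "K \<le> v j * w j" if "j \<in> {1..h}" for j
    unfolding K_def using that hne by (intro Min_le) auto
  obtain Lf where Lf1: "Lf < K" and Lf2: "\<And>x y. x \<in> {a..b} \<Longrightarrow> y \<in> {a..b} \<Longrightarrow> \<bar>f x - f y\<bar> \<le> Lf * \<bar>x - y\<bar>"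
    using Lip_real[OF ab assms(8)[folded K_def]] by blast
  have pZ: "p x = 0" if "x \<notin> {a<..<b}" for x
    using pnn[rule_format, of x] psupp that by (metis less_eq_real_def mem_Collect_eq)
  have H0: "hess (risk a b h v w f p) \<theta> k k \<ge> 0" if k: "k \<in> {1..h}" for k
  proof -
    define u :: "nat \<Rightarrow> real" where "u = (\<lambda>j. if j = k then 1 else 0)"
    have "\<not> (\<exists>u :: nat \<Rightarrow> real. (\<Sum>i = 1..h+1. \<Sum>j = 1..h+1. u i * hess (risk a b h v w f p) \<theta> i j * u j) < 0)"
      using assms(16) assms(9) unfolding descending_critical_point_def by blast
    then have "(\<Sum>i = 1..h+1. \<Sum>j = 1..h+1. u i * hess (risk a b h v w f p) \<theta> i j * u j) \<ge> 0" by (meson not_le)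
    moreover have "(\<Sum>i = 1..h+1. \<Sum>j = 1..h+1. u i * hess (risk a b h v w f p) \<theta> i j * u j) = hess (risk a b h v w f p) \<theta> k k"
      unfolding u_def using k by (intro delta_sum) auto
    ultimately show ?thesis by simp
  qed
  interpret N: nnset a b h v w \<theta> f p Lf
  proof
    show "a < b" by (rule ab)
    show "\<And>i. i \<in> {1..h} \<Longrightarrow> 0 < v i \<and> 0 < w i" using vw by auto
    show "continuous_on UNIV f" "continuous_on UNIV p" by (rule fc, rule pc)
    show "\<And>x. 0 \<le> p x" using pnn by auto
    show "{x. 0 < p x} = {a<..<b}" by (rule psupp)
    show "\<And>x y. x \<in> {a..b} \<Longrightarrow> y \<in> {a..b} \<Longrightarrow> \<bar>f x - f y\<bar> \<le> Lf * \<bar>x - y\<bar>" by (rule Lf2)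
    show "\<And>j. j \<in> {1..h} \<Longrightarrow> Lf < v j * w j" using Lf1 Kle by fastforce
    fix k assume k: "k \<in> {1..h}"
    have vk: "v k > 0" "w k > 0" using vw k by auto
    have pZ': "\<And>x. x \<notin> {a<..<b} \<Longrightarrow> p x = 0" using pZ by blast
    have P0: "partial (risk a b h v w f p) k \<theta> = 0" using assms(9) k by auto
    note FF = FD_facts[OF k vk fc pc pZ' less_imp_le[OF ab] P0 H0[OF k]]
    show "integral {-(\<theta> k / w k)..(1 - \<theta> k)/w k} (\<lambda>x. (NN h v w \<theta> x - f x) * p x) = 0"
      by (rule FF(1))
    show "(NN h v w \<theta> ((1 - \<theta> k)/w k) - f ((1 - \<theta> k)/w k)) * p ((1 - \<theta> k)/w k)
          - (NN h v w \<theta> (-(\<theta> k / w k)) - f (-(\<theta> k / w k))) * p (-(\<theta> k / w k))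
          \<le> v k * w k * integral {-(\<theta> k / w k)..(1 - \<theta> k)/w k} p"
      by (rule FF(2))
  qed
  define m where "m = Min (w ` {1..h})"
  have mle: "m \<le> w j" if "j \<in> {1..h}" for j unfolding m_def using that hne by (intro Min_le) auto
  have mpos: "m > 0"
  proof -
    have "m \<in> w ` {1..h}" unfolding m_def using hne by (intro Min_in) auto
    then show ?thesis using vw by auto
  qed
  have de: "\<epsilon> - \<delta> > 1 / m"
  proof -
    have "1 / m < 2 / m" using mpos by (simp add: divide_strict_right_mono)
    then show ?thesis using assms(12) unfolding m_def by simp
  qed
  show ?thesis
  proof
    fix x assume x: "x \<in> {a<..<b}"
    show "(\<Sum>j \<in> {j \<in> {1..h}. x \<in> Iset a b w \<theta> j}. v j * w j)
             \<le> 4 * Max (insert 0 ((\<lambda>j. v j * w j) ` {j \<in> {1..h}. x \<in> Iset a b w \<theta> j}))"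
    proof (rule N.bound_at[OF _ _ mpos mle assms(11) de _ assms(14) assms(15)])
      show "a < x" "x < b" using x by auto
      fix z t assume z: "z \<in> {a+\<delta>..b-\<delta>}" and t: "t \<in> {a..b}" and tz: "\<bar>t - z\<bar> \<le> 1/m"
      show "\<bar>p t - p z\<bar> \<le> p z"
        by (rule Lip_p_bound[OF mpos assms(13)[folded m_def] z _ t tz]) (use z assms(11) pnn in auto)
    qed
  qed
qed



end
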